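(* Assume the standing setting and $\int_{\mathcal F}\|f\|^2\,\mathrm d\nu(f)<\infty$. Let $\{\bar u^\theta_{t\to r}\}$ be a parametric family of maps $\mathcal F\to\mathcal F$ indexed by $\theta$ and $0<t<r<1$, and let $(t,r)$ be random with a fixed distribution on $\{(t,r):0<t<r<1\}$, independent of $f\sim\nu$. Define $$\mathcal L^M(\theta)=\mathbb E_{t,r}\,\mathbb E_{g\sim\mu_t}\big[\|\bar u_{t\to r}(g)-\bar u^\theta_{t\to r}(g)\|^2\big],$$ $$\mathcal L^M_c(\theta)=\mathbb E_{t,r}\,\mathbb E_{f\sim\nu}\,\mathbb E_{g\sim\mu_t^f}\Big[\big\|(r-t)\big(\tfrac{\partial}{\partial t}\bar u_{t\to r}(g)+D\bar u_{t\to r}(g)[u_t^f(g)]\big)+u_t^f(g)-\bar u^\theta_{t\to r}(g)\big\|^2\Big],$$ and assume all quantities appearing inside the norms are square integrable with respect to the respective measures. Then $\mathcal L^M_c(\theta)=\mathcal L^M(\theta)+C$, where $C\in\mathbb R$ does not depend on $\theta$.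
   Context: Standing setting: $(\mathcal F,\langle\cdot,\cdot\rangle)$ is a real separable Hilbert space with norm $\|\cdot\|$; $D$ is the Fréchet derivative in the function argument. $C_0$ is a self-adjoint, positive, trace-class covariance operator on $\mathcal F$ and $\mu_0=\mathcal N(0,C_0)$. $\nu$ is a Borel probability measure on $\mathcal F$. Fix $\sigma_{\min}\in(0,1)$, $\sigma_t=1-(1-\sigma_{\min})t$. For $f\in\mathcal F$: $\mu_t^f=\mathcal N(tf,\sigma_t^2C_0)$, $\phi_t^f(g)=\sigma_t g+tf$, $u_t^f(g)=\frac{1-\sigma_{\min}}{1-(1-\sigma_{\min})t}(tf-g)+f$. Marginal measure $\mu_t(A)=\int_{\mathcal F}\mu_t^f(A)\,\mathrm d\nu(f)$; assume $\mu_t^f\ll\mu_t$ for $\nu$-a.e. $f$, a.e. $t$; $\rho_t^f=\frac{\mathrm d\mu_t^f}{\mathrm d\mu_t}$. Marginal velocity $u_t(g)=\int_{\mathcal F}u_t^f(g)\rho_t^f(g)\,\mathrm d\nu(f)$. Marginal flow $\phi_t$ solves $\partial_t\phi_t(g)=u_t(\phi_t(g))$, $\phi_0=\mathrm{Id}_{\mathcal F}$, assumed well defined and invertible; two-parameter flow $\phi_{t\to r}=\phi_r\circ\phi_t^{-1}$. Mean velocity: $\bar u_{t\to r}=\frac{1}{r-t}(\phi_{t\to r}-\mathrm{Id}_{\mathcal F})$ for $t\ne r$. *)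

theory Defs
  imports "HOL-Probability.Probability"
begin

definition orthonormal_basis :: "'a::real_inner set \<Rightarrow> bool" where
  "orthonormal_basis B \<longleftrightarrow>
     (\<forall>b\<in>B. norm b = 1) \<and> (\<forall>b\<in>B. \<forall>c\<in>B. b \<noteq> c \<longrightarrow> b \<bullet> c = 0) \<and>
     closure (span B) = UNIV"

text \<open>For a positive self-adjoint operator, trace class means that the trace
  sum of (C e) inner e over an orthonormal basis is finite.\<close>
definition covariance_operator :: "('a::{real_inner,complete_space} \<Rightarrow> 'a) \<Rightarrow> bool" where
  "covariance_operator C \<longleftrightarrow>
     bounded_linear C \<and>
     (\<forall>x y. C x \<bullet> y = x \<bullet> C y) \<and>
     (\<forall>x. 0 \<le> C x \<bullet> x) \<and>
     (\<exists>B. orthonormal_basis B \<and> (\<lambda>b. C b \<bullet> b) summable_on B)"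

definition normal_law :: "real \<Rightarrow> real \<Rightarrow> real measure" where
  "normal_law m v = (if v = 0 then return borel m else density lborel (normal_density m (sqrt v)))"

definition gaussian_measure :: "'a::{real_inner,polish_space} measure \<Rightarrow> 'a \<Rightarrow> ('a \<Rightarrow> 'a) \<Rightarrow> bool" where
  "gaussian_measure M m C \<longleftrightarrow>
     prob_space M \<and> sets M = sets borel \<and>
     (\<forall>h. distr M borel (\<lambda>x. x \<bullet> h) = normal_law (m \<bullet> h) (C h \<bullet> h))"

definition sigma_t :: "real \<Rightarrow> real \<Rightarrow> real" where
  "sigma_t smin t = 1 - (1 - smin) * t"

definition cond_velocity :: "real \<Rightarrow> real \<Rightarrow> 'a::real_vector \<Rightarrow> 'a \<Rightarrow> 'a" where
  "cond_velocity smin t f g =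
     ((1 - smin) / (1 - (1 - smin) * t)) *\<^sub>R (t *\<^sub>R f - g) + f"

definition marginal_velocity ::
  "'a::{real_inner,polish_space} measure \<Rightarrow> (real \<Rightarrow> 'a \<Rightarrow> 'a \<Rightarrow> real) \<Rightarrow> real \<Rightarrow> real \<Rightarrow> 'a \<Rightarrow> 'a" where
  "marginal_velocity \<nu> rho smin t g = (\<integral>f. rho t f g *\<^sub>R cond_velocity smin t f g \<partial>\<nu>)"

definition mean_velocity :: "(real \<Rightarrow> 'a::real_vector \<Rightarrow> 'a) \<Rightarrow> real \<Rightarrow> real \<Rightarrow> 'a \<Rightarrow> 'a" where
  "mean_velocity phi t r g = (1 / (r - t)) *\<^sub>R (phi r (inv (phi t) g) - g)"

end

theory Submission
  imports Defs
begin

lemma integrableI_sequence':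
  fixes f :: "'a \<Rightarrow> 'b::{real_normed_vector, complete_space, second_countable_topology}"
  assumes f[measurable]: "f \<in> borel_measurable M"
  assumes s: "\<And>i. Bochner_Integration.simple_bochner_integrable M (s i)"
  assumes lim: "(\<lambda>i. \<integral>\<^sup>+x. norm (f x - s i x) \<partial>M) \<longlonglongrightarrow> 0" (is "?S \<longlonglongrightarrow> 0")
  shows "integrable M f"
proof -
  let ?s = "\<lambda>n. Bochner_Integration.simple_bochner_integral M (s n)"
  have "\<exists>x. ?s \<longlonglongrightarrow> x"
    unfolding convergent_eq_Cauchy
  proof (rule metric_CauchyI)
    fix e :: real assume "0 < e"
    then have "0 < ennreal (e / 2)" by auto
    from order_tendstoD(2)[OF lim this]
    obtain M where M: "\<And>n. M \<le> n \<Longrightarrow> ?S n < e / 2"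
      by (auto simp: eventually_sequentially)
    show "\<exists>M. \<forall>m\<ge>M. \<forall>n\<ge>M. dist (?s m) (?s n) < e"
    proof (intro exI allI impI)
      fix m n assume m: "M \<le> m" and n: "M \<le> n"
      have "?S n \<noteq> \<infinity>"
        using M[OF n] by auto
      have "norm (?s n - ?s m) \<le> ?S n + ?S m"
        by (intro simple_bochner_integral_bounded s f)
      also have "\<dots> < ennreal (e / 2) + e / 2"
        by (intro add_strict_mono M n m)
      also have "\<dots> = e" using \<open>0<e\<close> by (simp flip: ennreal_plus)
      finally show "dist (?s n) (?s m) < e"
        using \<open>0<e\<close> by (simp add: dist_norm ennreal_less_iff)
    qed
  qed
  then obtain x where "?s \<longlonglongrightarrow> x" ..
  show ?thesis
    by (rule, rule) fact+
qed

lemma integrableI_bounded':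
  fixes f :: "'a \<Rightarrow> 'b::{real_normed_vector, complete_space, second_countable_topology}"
  assumes f[measurable]: "f \<in> borel_measurable M" and fin: "(\<integral>\<^sup>+x. norm (f x) \<partial>M) < \<infinity>"
  shows "integrable M f"
proof -
  from borel_measurable_implies_sequence_metric[OF f, of 0] obtain s where
    s: "\<And>i. simple_function M (s i)" and
    pointwise: "\<And>x. x \<in> space M \<Longrightarrow> (\<lambda>i. s i x) \<longlonglongrightarrow> f x" and
    bound: "\<And>i x. x \<in> space M \<Longrightarrow> norm (s i x) \<le> 2 * norm (f x)"
    by simp metis
  show ?thesis
  proof (rule integrableI_sequence')
    { fix i
      have "(\<integral>\<^sup>+x. norm (s i x) \<partial>M) \<le> (\<integral>\<^sup>+x. ennreal (2 * norm (f x)) \<partial>M)"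
        by (intro nn_integral_mono) (simp add: bound)
      also have "\<dots> = 2 * (\<integral>\<^sup>+x. ennreal (norm (f x)) \<partial>M)"
        by (simp add: ennreal_mult nn_integral_cmult)
      also have "\<dots> < top"
        using fin by (simp add: ennreal_mult_less_top)
      finally have "(\<integral>\<^sup>+x. norm (s i x) \<partial>M) < \<infinity>"
        by simp }
    note fin_s = this
    show "\<And>i. Bochner_Integration.simple_bochner_integrable M (s i)"
      by (rule simple_bochner_integrableI_bounded) fact+
    show "(\<lambda>i. \<integral>\<^sup>+ x. ennreal (norm (f x - s i x)) \<partial>M) \<longlonglongrightarrow> 0"
    proof (rule nn_integral_dominated_convergence_norm)
      show "\<And>j. AE x in M. norm (s j x) \<le> 2 * norm (f x)"
        using bound by auto
      show "\<And>i. s i \<in> borel_measurable M" "(\<lambda>x. 2 * norm (f x)) \<in> borel_measurable M"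
        using s by (auto intro: borel_measurable_simple_function)
      show "(\<integral>\<^sup>+ x. ennreal (2 * norm (f x)) \<partial>M) < \<infinity>"
        using fin by (simp add: nn_integral_cmult ennreal_mult ennreal_mult_less_top)
      show "AE x in M. (\<lambda>i. s i x) \<longlonglongrightarrow> f x"
        using pointwise by auto
    qed fact
  qed fact
qed

lemma meas_int_kernel:
  fixes h :: "'a \<Rightarrow> 'b \<Rightarrow> real"
  assumes h[measurable]: "(\<lambda>(x,y). h x y) \<in> borel_measurable (A \<Otimes>\<^sub>M B)"
    and K[measurable]: "K \<in> measurable A (subprob_algebra B)" and nn: "\<And>x y. 0 \<le> h x y"
  shows "(\<lambda>x. \<integral>y. h x y \<partial>K x) \<in> borel_measurable A"
proof -
  have "(\<lambda>x. enn2real (\<integral>\<^sup>+y. ennreal (h x y) \<partial>K x)) \<in> borel_measurable A"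
    by (intro borel_measurable_enn2real nn_integral_measurable_subprob_algebra2[OF _ K]) measurable
  then show ?thesis
  proof (rule measurable_cong[THEN iffD1, rotated])
    fix x assume x: "x \<in> space A"
    have sK: "sets (K x) = sets B" using K x by (rule sets_kernel)
    have "(\<lambda>y. h x y) \<in> borel_measurable B" using measurable_Pair2[OF h x] by simp
    then show "enn2real (\<integral>\<^sup>+y. ennreal (h x y) \<partial>K x) = (\<integral>y. h x y \<partial>K x)"
      by (subst integral_eq_nn_integral) (auto simp: measurable_cong_sets[OF sK refl] nn)
  qed
qed

lemma real_sq_sum_le: "((x::real) + y)\<^sup>2 \<le> 2 * x\<^sup>2 + 2 * y\<^sup>2"
proof -
  have "0 \<le> (x - y)\<^sup>2" by simp
  then show ?thesis by (simp add: power2_eq_square algebra_simps)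
qed

lemma real_prod_le_sq: "(x::real) * y \<le> x\<^sup>2 + y\<^sup>2" if "0 \<le> x" "0 \<le> y"
proof -
  have "0 \<le> (x - y)\<^sup>2" by simp
  moreover have "0 \<le> x * y" using that by simp
  ultimately show ?thesis by (simp add: power2_eq_square algebra_simps)
qed

lemma real_le_1_sq: "(x::real) \<le> 1 + x\<^sup>2"
proof -
  have "0 \<le> (x - 1)\<^sup>2" by simp
  then have "x * 2 \<le> 1 + x * x" by (simp add: power2_eq_square algebra_simps)
  moreover have "0 \<le> x * x" by simp
  ultimately show ?thesis unfolding power2_eq_square by linarith
qed

lemma norm_diff_sq_expand:
  fixes a b :: "'a::real_inner"
  shows "(norm (a - b))\<^sup>2 = (norm a)\<^sup>2 - 2 * (a \<bullet> b) + (norm b)\<^sup>2"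
  by (simp add: power2_norm_eq_inner inner_diff_left inner_diff_right inner_commute)

lemma norm_diff_sq_le:
  fixes a b :: "'a::real_normed_vector"
  shows "(norm (a - b))\<^sup>2 \<le> 2 * (norm a)\<^sup>2 + 2 * (norm b)\<^sup>2"
proof -
  have "norm (a - b) \<le> norm a + norm b" by (rule norm_triangle_ineq4)
  then have "(norm (a - b))\<^sup>2 \<le> (norm a + norm b)\<^sup>2" by (simp add: power_mono)
  also have "\<dots> \<le> 2 * (norm a)\<^sup>2 + 2 * (norm b)\<^sup>2" by (rule real_sq_sum_le)
  finally show ?thesis .
qed

lemma norm_add_sq_le:
  fixes a b :: "'a::real_normed_vector"
  shows "(norm (a + b))\<^sup>2 \<le> 2 * (norm a)\<^sup>2 + 2 * (norm b)\<^sup>2"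
  using norm_diff_sq_le[of a "-b"] by simp

lemma abs_inner_le_sq:
  fixes a b :: "'a::real_inner"
  shows "\<bar>a \<bullet> b\<bar> \<le> (norm a)\<^sup>2 + (norm b)\<^sup>2"
proof -
  have "\<bar>a \<bullet> b\<bar> \<le> norm a * norm b" by (rule Cauchy_Schwarz_ineq2)
  also have "\<dots> \<le> (norm a)\<^sup>2 + (norm b)\<^sup>2" by (rule real_prod_le_sq) auto
  finally show ?thesis .
qed
lemma pointwise:
  fixes \<nu> M :: "'f::{real_inner,polish_space} measure" and K :: "'f \<Rightarrow> 'f measure"
    and W :: "'f \<Rightarrow> 'f \<Rightarrow> real" and X Y :: "'f \<Rightarrow> 'f \<Rightarrow> 'f" and A U Th :: "'f \<Rightarrow> 'f"
    and L :: "'f \<Rightarrow> 'f \<Rightarrow> 'f"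
  assumes pn: "prob_space \<nu>" and pM: "prob_space M"
    and sn: "sets \<nu> = sets borel" and sM: "sets M = sets borel"
    and K[measurable]: "K \<in> measurable \<nu> (subprob_algebra M)"
    and Kd: "AE f in \<nu>. K f = density M (\<lambda>g. ennreal (W f g))"
    and Wn: "\<And>f g. 0 \<le> W f g"
    and mW[measurable]: "(\<lambda>(f,g). W f g) \<in> borel_measurable (\<nu> \<Otimes>\<^sub>M M)"
    and mX[measurable]: "(\<lambda>(f,g). X f g) \<in> borel_measurable (\<nu> \<Otimes>\<^sub>M M)"
    and mY[measurable]: "(\<lambda>(f,g). Y f g) \<in> borel_measurable (\<nu> \<Otimes>\<^sub>M M)"
    and mU[measurable]: "U \<in> borel_measurable M" and mT[measurable]: "Th \<in> borel_measurable M"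
    and W1: "AE g in M. (\<integral>\<^sup>+ f. ennreal (W f g) \<partial>\<nu>) = 1"
    and Xd: "\<And>f g. X f g = A g + L g (Y f g)"
    and Ud: "\<And>g. U g = A g + L g (\<integral>f. W f g *\<^sub>R Y f g \<partial>\<nu>)"
    and Lb: "\<And>g. bounded_linear (L g)"
    and fX: "(\<integral>\<^sup>+f. \<integral>\<^sup>+g. ennreal ((norm (X f g))\<^sup>2) \<partial>K f \<partial>\<nu>) < \<infinity>"
    and fY: "(\<integral>\<^sup>+f. \<integral>\<^sup>+g. ennreal ((norm (Y f g))\<^sup>2) \<partial>K f \<partial>\<nu>) < \<infinity>"
    and fU: "(\<integral>\<^sup>+g. ennreal ((norm (U g))\<^sup>2) \<partial>M) < \<infinity>"
    and fT: "(\<integral>\<^sup>+g. ennreal ((norm (Th g))\<^sup>2) \<partial>M) < \<infinity>"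
  shows "(\<integral>f. \<integral>g. (norm (X f g - Th g))\<^sup>2 \<partial>K f \<partial>\<nu>)
       = (\<integral>g. (norm (U g - Th g))\<^sup>2 \<partial>M)
         + ((\<integral>f. \<integral>g. (norm (X f g))\<^sup>2 \<partial>K f \<partial>\<nu>) - (\<integral>g. (norm (U g))\<^sup>2 \<partial>M))"
proof -
  interpret N: prob_space \<nu> by (rule pn)
  interpret Mp: prob_space M by (rule pM)
  interpret P: pair_prob_space \<nu> M ..
  have spM: "space M = UNIV" using sets_eq_imp_space_eq[OF sM] by simp
  have spn: "space \<nu> = UNIV" using sets_eq_imp_space_eq[OF sn] by simp
  have mWx[measurable]: "(\<lambda>g. W f g) \<in> borel_measurable M" for f
    using measurable_Pair2[OF mW, of f] spn by simp
  have Kd': "AE f in \<nu>. \<integral>\<^sup>+g. ennreal (h f g) \<partial>K f = \<integral>\<^sup>+g. ennreal (W f g * h f g) \<partial>M"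
    if [measurable]: "(\<lambda>(f,g). h f g) \<in> borel_measurable (\<nu> \<Otimes>\<^sub>M M)" and hn: "\<And>f g. 0 \<le> h f g" for h
    using Kd
  proof eventually_elim
    case (elim f)
    have "(\<lambda>g. h f g) \<in> borel_measurable M" using measurable_Pair2[OF that(1), of f] spn by simp
    then show ?case using elim
      by (simp add: nn_integral_density ennreal_mult Wn hn)
  qed
  have Kdi: "AE f in \<nu>. \<integral>g. h f g \<partial>K f = \<integral>g. W f g * h f g \<partial>M"
    if [measurable]: "(\<lambda>(f,g). h f g) \<in> borel_measurable (\<nu> \<Otimes>\<^sub>M M)" for h
    using Kd
  proof eventually_elim
    case (elim f)
    have "(\<lambda>g. h f g) \<in> borel_measurable M" using measurable_Pair2[OF that(1), of f] spn by simp
    then show ?case using elim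
      by (simp add: integral_density Wn)
  qed
  have trans1: "(\<integral>\<^sup>+p. ennreal (W (fst p) (snd p) * h (fst p) (snd p)) \<partial>(\<nu> \<Otimes>\<^sub>M M))
      = (\<integral>\<^sup>+f. \<integral>\<^sup>+g. ennreal (h f g) \<partial>K f \<partial>\<nu>)"
    if [measurable]: "(\<lambda>(f,g). h f g) \<in> borel_measurable (\<nu> \<Otimes>\<^sub>M M)" and hn: "\<And>f g. 0 \<le> h f g" for h
  proof -
    have "(\<integral>\<^sup>+p. ennreal (W (fst p) (snd p) * h (fst p) (snd p)) \<partial>(\<nu> \<Otimes>\<^sub>M M))
        = (\<integral>\<^sup>+f. \<integral>\<^sup>+g. ennreal (W f g * h f g) \<partial>M \<partial>\<nu>)"
      apply (subst Mp.nn_integral_fst[symmetric])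
      using that(1) by measurable
    also have "\<dots> = (\<integral>\<^sup>+f. \<integral>\<^sup>+g. ennreal (h f g) \<partial>K f \<partial>\<nu>)"
      using Kd'[of h] hn by (intro nn_integral_cong_AE) (auto elim!: eventually_mono)
    finally show ?thesis .
  qed
  have trans2: "(\<integral>\<^sup>+p. ennreal (W (fst p) (snd p) * k (snd p)) \<partial>(\<nu> \<Otimes>\<^sub>M M))
      = (\<integral>\<^sup>+g. ennreal (k g) \<partial>M)"
    if [measurable]: "k \<in> borel_measurable M" and kn: "\<And>g. 0 \<le> k g" for k
  proof -
    have "(\<integral>\<^sup>+p. ennreal (W (fst p) (snd p) * k (snd p)) \<partial>(\<nu> \<Otimes>\<^sub>M M))
        = (\<integral>\<^sup>+g. \<integral>\<^sup>+f. ennreal (W f g * k g) \<partial>\<nu> \<partial>M)"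
      apply (subst P.nn_integral_snd[symmetric])
      using that(1) by measurable
    also have "\<dots> = (\<integral>\<^sup>+g. (\<integral>\<^sup>+f. ennreal (W f g) \<partial>\<nu>) * ennreal (k g) \<partial>M)"
      by (intro nn_integral_cong) (simp add: ennreal_mult Wn kn nn_integral_multc)
    also have "\<dots> = (\<integral>\<^sup>+g. ennreal (k g) \<partial>M)"
      using W1 by (intro nn_integral_cong_AE) (auto elim!: eventually_mono)
    finally show ?thesis .
  qed

  let ?P = "\<nu> \<Otimes>\<^sub>M M"
  have intP: "integrable ?P (\<lambda>(f,g). W f g * h f g)"
    if [measurable]: "(\<lambda>(f,g). h f g) \<in> borel_measurable (\<nu> \<Otimes>\<^sub>M M)" and hn: "\<And>f g. 0 \<le> h f g"
      and fin: "(\<integral>\<^sup>+f. \<integral>\<^sup>+g. ennreal (h f g) \<partial>K f \<partial>\<nu>) < \<infinity>" for h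
    unfolding split_beta'
    by (rule integrableI_nonneg) (use that in \<open>measurable\<close>, auto simp: Wn hn trans1[OF that(1) hn] fin[unfolded infinity_ennreal_def])
  have intP2: "integrable ?P (\<lambda>(f,g). W f g * k g)"
    if [measurable]: "k \<in> borel_measurable M" and kn: "\<And>g. 0 \<le> k g"
      and fin: "(\<integral>\<^sup>+g. ennreal (k g) \<partial>M) < \<infinity>" for k
    unfolding split_beta'
    by (rule integrableI_nonneg) (use that in \<open>measurable\<close>, auto simp: Wn kn trans2[OF that(1) kn] fin[unfolded infinity_ennreal_def])
  have iWX2: "integrable ?P (\<lambda>(f,g). W f g * (norm (X f g))\<^sup>2)"
    by (rule intP) (use fX in auto)
  have iWY2: "integrable ?P (\<lambda>(f,g). W f g * (norm (Y f g))\<^sup>2)"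
    by (rule intP) (use fY in auto)
  have iWT2: "integrable ?P (\<lambda>(f,g). W f g * (norm (Th g))\<^sup>2)"
    by (rule intP2) (use fT in auto)
  have iW1: "integrable ?P (\<lambda>(f,g). W f g * 1)"
    by (rule intP2) (auto simp: Mp.emeasure_space_1)
  have iWXmT: "integrable ?P (\<lambda>(f,g). W f g * (norm (X f g - Th g))\<^sup>2)"
  proof (rule Bochner_Integration.integrable_bound[OF Bochner_Integration.integrable_add[OF integrable_mult_right[OF iWX2, of 2] integrable_mult_right[OF iWT2, of 2]]])
    show "(\<lambda>(f,g). W f g * (norm (X f g - Th g))\<^sup>2) \<in> borel_measurable ?P" by measurable
    show "AE x in ?P. norm ((\<lambda>(f,g). W f g * (norm (X f g - Th g))\<^sup>2) x) \<le>
      norm (2 * (\<lambda>(f,g). W f g * (norm (X f g))\<^sup>2) x + 2 * (\<lambda>(f,g). W f g * (norm (Th g))\<^sup>2) x)"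
    proof (intro AE_I2, goal_cases)
      case (1 x)
      obtain f g where x: "x = (f, g)" by (cases x)
      have "W f g * (norm (X f g - Th g))\<^sup>2 \<le> W f g * (2 * (norm (X f g))\<^sup>2 + 2 * (norm (Th g))\<^sup>2)"
        by (intro mult_left_mono norm_diff_sq_le Wn)
      then show ?case unfolding x using Wn[of f g] by (simp add: algebra_simps)
    qed
  qed
  have iWXT: "integrable ?P (\<lambda>(f,g). W f g * (X f g \<bullet> Th g))"
  proof (rule Bochner_Integration.integrable_bound[OF Bochner_Integration.integrable_add[OF iWX2 iWT2]])
    show "(\<lambda>(f,g). W f g * (X f g \<bullet> Th g)) \<in> borel_measurable ?P" by measurable
    show "AE x in ?P. norm ((\<lambda>(f,g). W f g * (X f g \<bullet> Th g)) x) \<le>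
      norm ((\<lambda>(f,g). W f g * (norm (X f g))\<^sup>2) x + (\<lambda>(f,g). W f g * (norm (Th g))\<^sup>2) x)"
    proof (intro AE_I2, goal_cases)
      case (1 x)
      obtain f g where x: "x = (f, g)" by (cases x)
      have "W f g * \<bar>X f g \<bullet> Th g\<bar> \<le> W f g * ((norm (X f g))\<^sup>2 + (norm (Th g))\<^sup>2)"
        by (intro mult_left_mono abs_inner_le_sq Wn)
      then show ?case unfolding x using Wn[of f g] by (simp add: algebra_simps abs_mult)
    qed
  qed
  have iWsnd: "integrable ?P (\<lambda>(f,g). W f g)" using iW1 by simp
  have finY: "AE g in M. (\<integral>\<^sup>+f. ennreal (W f g * (norm (Y f g))\<^sup>2) \<partial>\<nu>) \<noteq> \<infinity>"
  proof (rule nn_integral_PInf_AE)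
    show "(\<lambda>g. \<integral>\<^sup>+f. ennreal (W f g * (norm (Y f g))\<^sup>2) \<partial>\<nu>) \<in> borel_measurable M"
      by measurable
    have "(\<integral>\<^sup>+g. \<integral>\<^sup>+f. ennreal (W f g * (norm (Y f g))\<^sup>2) \<partial>\<nu> \<partial>M)
        = (\<integral>\<^sup>+p. ennreal (W (fst p) (snd p) * (norm (Y (fst p) (snd p)))\<^sup>2) \<partial>?P)"
    proof -
      have mm: "(\<lambda>p. ennreal (W (fst p) (snd p) * (norm (Y (fst p) (snd p)))\<^sup>2)) \<in> borel_measurable ?P"
        by measurable
      show ?thesis using P.nn_integral_snd[OF mm] by simp
    qed
    also have "\<dots> = (\<integral>\<^sup>+f. \<integral>\<^sup>+g. ennreal ((norm (Y f g))\<^sup>2) \<partial>K f \<partial>\<nu>)"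
      by (rule trans1) auto
    finally show "(\<integral>\<^sup>+g. \<integral>\<^sup>+f. ennreal (W f g * (norm (Y f g))\<^sup>2) \<partial>\<nu> \<partial>M) \<noteq> \<infinity>"
      using fY by simp
  qed
  have condmean: "AE g in M. (\<forall>c. (\<integral>f. W f g * (X f g \<bullet> c) \<partial>\<nu>) = U g \<bullet> c) \<and> (\<integral>f. W f g \<partial>\<nu>) = 1"
    using finY W1
  proof eventually_elim
    case (elim g)
    interpret Lg: bounded_linear "L g" by (rule Lb)
    have mWg: "(\<lambda>f. W f g) \<in> borel_measurable \<nu>"
      using measurable_Pair1[OF mW, of g] spM by simp
    have mYg: "(\<lambda>f. Y f g) \<in> borel_measurable \<nu>"
      using measurable_Pair1[OF mY, of g] spM by simp
    have int1: "(\<integral>f. W f g \<partial>\<nu>) = 1"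
      using elim(2) by (subst integral_eq_nn_integral) (auto simp: mWg Wn)
    have iWg: "integrable \<nu> (\<lambda>f. W f g)"
      using elim(2) by (intro integrableI_nonneg) (auto simp: mWg Wn)
    have iWYg: "integrable \<nu> (\<lambda>f. W f g *\<^sub>R Y f g)"
    proof (rule integrableI_bounded')
      show "(\<lambda>f. W f g *\<^sub>R Y f g) \<in> borel_measurable \<nu>" using mWg mYg by measurable
      have "(\<integral>\<^sup>+f. ennreal (norm (W f g *\<^sub>R Y f g)) \<partial>\<nu>)
          \<le> (\<integral>\<^sup>+f. ennreal (W f g) + ennreal (W f g * (norm (Y f g))\<^sup>2) \<partial>\<nu>)"
      proof (intro nn_integral_mono)
        fix f
        have "W f g * norm (Y f g) \<le> W f g * (1 + (norm (Y f g))\<^sup>2)"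
          by (intro mult_left_mono Wn real_le_1_sq)
        then show "ennreal (norm (W f g *\<^sub>R Y f g)) \<le> ennreal (W f g) + ennreal (W f g * (norm (Y f g))\<^sup>2)"
          using Wn[of f g] by (simp add: ennreal_plus[symmetric] algebra_simps del: ennreal_plus)
      qed
      also have "\<dots> = (\<integral>\<^sup>+f. ennreal (W f g) \<partial>\<nu>) + (\<integral>\<^sup>+f. ennreal (W f g * (norm (Y f g))\<^sup>2) \<partial>\<nu>)"
      proof (rule nn_integral_add)
        have m1: "(\<lambda>(f,g). ennreal (W f g)) \<in> borel_measurable ?P" by measurable
        have m2: "(\<lambda>(f,g). ennreal (W f g * (norm (Y f g))\<^sup>2)) \<in> borel_measurable ?P" by measurable
        show "(\<lambda>f. ennreal (W f g)) \<in> borel_measurable \<nu>"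
          using measurable_Pair1[OF m1, of g] spM by simp
        show "(\<lambda>f. ennreal (W f g * (norm (Y f g))\<^sup>2)) \<in> borel_measurable \<nu>"
          using measurable_Pair1[OF m2, of g] spM by simp
      qed
      also have "\<dots> < \<infinity>" using elim by (simp add: less_top[symmetric])
      finally show "(\<integral>\<^sup>+f. ennreal (norm (W f g *\<^sub>R Y f g)) \<partial>\<nu>) < \<infinity>" .
    qed
    have iX: "integrable \<nu> (\<lambda>f. W f g *\<^sub>R A g + L g (W f g *\<^sub>R Y f g))"
      using iWg iWYg by (intro Bochner_Integration.integrable_add integrable_scaleR_left integrable_bounded_linear[OF Lb]) auto
    have eqX: "W f g *\<^sub>R X f g = W f g *\<^sub>R A g + L g (W f g *\<^sub>R Y f g)" for f
      by (simp add: Xd scaleR_add_right Lg.scaleR)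
    have intX: "(\<integral>f. W f g *\<^sub>R X f g \<partial>\<nu>) = U g"
      unfolding eqX using iWg iWYg
      by (simp add: Bochner_Integration.integral_add integrable_scaleR_left integrable_bounded_linear[OF Lb]
          integral_bounded_linear[OF Lb] int1 Ud)
    have iX': "integrable \<nu> (\<lambda>f. W f g *\<^sub>R X f g)" unfolding eqX by (rule iX)
    have "(\<integral>f. W f g * (X f g \<bullet> c) \<partial>\<nu>) = U g \<bullet> c" for c
    proof -
      have "(\<integral>f. W f g * (X f g \<bullet> c) \<partial>\<nu>) = (\<integral>f. (W f g *\<^sub>R X f g) \<bullet> c \<partial>\<nu>)" by simp
      also have "\<dots> = (\<integral>f. W f g *\<^sub>R X f g \<partial>\<nu>) \<bullet> c" using iX' by (rule integral_inner_left)
      finally show ?thesis by (simp add: intX)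
    qed
    then show ?case using int1 by blast
  qed

  have iU2: "integrable M (\<lambda>g. (norm (U g))\<^sup>2)"
    by (rule integrableI_nonneg) (use fU in \<open>auto simp: less_top[symmetric]\<close>)
  have iT2: "integrable M (\<lambda>g. (norm (Th g))\<^sup>2)"
    by (rule integrableI_nonneg) (use fT in \<open>auto simp: less_top[symmetric]\<close>)
  have iUT: "integrable M (\<lambda>g. U g \<bullet> Th g)"
    by (rule Bochner_Integration.integrable_bound[OF Bochner_Integration.integrable_add[OF iU2 iT2]])
      (auto intro!: AE_I2 order_trans[OF abs_inner_le_sq])
  have mK1: "(\<lambda>f. \<integral>g. h f g \<partial>K f) \<in> borel_measurable \<nu>"
    if "(\<lambda>(f,g). h f g) \<in> borel_measurable ?P" "\<And>f g. 0 \<le> h f g" for h :: "'f \<Rightarrow> 'f \<Rightarrow> real"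
    by (rule meas_int_kernel[OF that(1) K that(2)])
  have LHSa: "(\<integral>f. \<integral>g. h f g \<partial>K f \<partial>\<nu>) = integral\<^sup>L ?P (\<lambda>(f,g). W f g * h f g)"
    if m[measurable]: "(\<lambda>(f,g). h f g) \<in> borel_measurable ?P" and hn: "\<And>f g. 0 \<le> h f g"
      and i: "integrable ?P (\<lambda>(f,g). W f g * h f g)" for h
  proof -
    have "(\<integral>f. \<integral>g. h f g \<partial>K f \<partial>\<nu>) = (\<integral>f. \<integral>g. W f g * h f g \<partial>M \<partial>\<nu>)"
      by (rule integral_cong_AE[OF mK1[OF m hn] _ Kdi[OF m]]) measurable
    also have "\<dots> = integral\<^sup>L ?P (\<lambda>(f,g). W f g * h f g)"
      by (rule P.integral_fst[OF i])
    finally show ?thesis .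
  qed
  have L1: "(\<integral>f. \<integral>g. (norm (X f g - Th g))\<^sup>2 \<partial>K f \<partial>\<nu>) = integral\<^sup>L ?P (\<lambda>(f,g). W f g * (norm (X f g - Th g))\<^sup>2)"
    by (rule LHSa[OF _ _ iWXmT]) auto
  have L2: "(\<integral>f. \<integral>g. (norm (X f g))\<^sup>2 \<partial>K f \<partial>\<nu>) = integral\<^sup>L ?P (\<lambda>(f,g). W f g * (norm (X f g))\<^sup>2)"
    by (rule LHSa[OF _ _ iWX2]) auto
  have expand: "integral\<^sup>L ?P (\<lambda>(f,g). W f g * (norm (X f g - Th g))\<^sup>2)
      = integral\<^sup>L ?P (\<lambda>(f,g). W f g * (norm (X f g))\<^sup>2) - 2 * integral\<^sup>L ?P (\<lambda>(f,g). W f g * (X f g \<bullet> Th g))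
        + integral\<^sup>L ?P (\<lambda>(f,g). W f g * (norm (Th g))\<^sup>2)"
  proof -
    have "(\<lambda>(f,g). W f g * (norm (X f g - Th g))\<^sup>2) = (\<lambda>p. ((\<lambda>(f,g). W f g * (norm (X f g))\<^sup>2) p
        - 2 * (\<lambda>(f,g). W f g * (X f g \<bullet> Th g)) p) + (\<lambda>(f,g). W f g * (norm (Th g))\<^sup>2) p)"
      by (auto simp: norm_diff_sq_expand algebra_simps)
    then show ?thesis
      using iWX2 iWXT iWT2 by (simp add: Bochner_Integration.integral_add Bochner_Integration.integral_diff)
  qed
  have cross: "integral\<^sup>L ?P (\<lambda>(f,g). W f g * (X f g \<bullet> Th g)) = (\<integral>g. U g \<bullet> Th g \<partial>M)"
  proof -
    have "integral\<^sup>L ?P (\<lambda>(f,g). W f g * (X f g \<bullet> Th g)) = (\<integral>g. \<integral>f. W f g * (X f g \<bullet> Th g) \<partial>\<nu> \<partial>M)"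
      by (rule P.integral_snd[OF iWXT, symmetric])
    also have "\<dots> = (\<integral>g. U g \<bullet> Th g \<partial>M)"
      by (rule integral_cong_AE) (measurable, use condmean in \<open>auto elim!: eventually_mono\<close>)
    finally show ?thesis .
  qed
  have theta: "integral\<^sup>L ?P (\<lambda>(f,g). W f g * (norm (Th g))\<^sup>2) = (\<integral>g. (norm (Th g))\<^sup>2 \<partial>M)"
  proof -
    have "integral\<^sup>L ?P (\<lambda>(f,g). W f g * (norm (Th g))\<^sup>2) = (\<integral>g. \<integral>f. W f g * (norm (Th g))\<^sup>2 \<partial>\<nu> \<partial>M)"
      by (rule P.integral_snd[OF iWT2, symmetric])
    also have "\<dots> = (\<integral>g. (\<integral>f. W f g \<partial>\<nu>) * (norm (Th g))\<^sup>2 \<partial>M)"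
      by simp
    also have "\<dots> = (\<integral>g. (norm (Th g))\<^sup>2 \<partial>M)"
      by (rule integral_cong_AE) (measurable, rule eventually_mono[OF condmean], simp)
    finally show ?thesis .
  qed
  have RHS: "(\<integral>g. (norm (U g - Th g))\<^sup>2 \<partial>M) = (\<integral>g. (norm (U g))\<^sup>2 \<partial>M) - 2 * (\<integral>g. U g \<bullet> Th g \<partial>M) + (\<integral>g. (norm (Th g))\<^sup>2 \<partial>M)"
    using iU2 iUT iT2 by (simp add: norm_diff_sq_expand Bochner_Integration.integral_add Bochner_Integration.integral_diff)
  show ?thesis
    unfolding L1 L2 expand cross theta RHS by simp
qed

lemma meas_LL:
  fixes H :: "real \<Rightarrow> real \<Rightarrow> 'f::{real_inner,polish_space} \<Rightarrow> 'f \<Rightarrow> real"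
    and \<nu> :: "'f measure" and mu :: "real \<Rightarrow> 'f \<Rightarrow> 'f measure"
  assumes H: "(\<lambda>q::(real \<times> real) \<times> 'f \<times> 'f. H (fst (fst q)) (snd (fst q)) (fst (snd q)) (snd (snd q)))
      \<in> borel_measurable ((borel \<Otimes>\<^sub>M borel) \<Otimes>\<^sub>M (borel \<Otimes>\<^sub>M borel))"
    and pn: "prob_space \<nu>" and sn: "sets \<nu> = sets borel"
    and mk2: "(\<lambda>p. mu (fst p) (snd p)) \<in> measurable (borel \<Otimes>\<^sub>M borel) (subprob_algebra borel)"
    and nn: "\<And>t r f g. 0 \<le> H t r f g"
  shows "(\<lambda>x. \<integral>f. \<integral>g. H (fst x) (snd x) f g \<partial>mu (fst x) f \<partial>\<nu>) \<in> borel_measurable (borel \<Otimes>\<^sub>M borel)"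
    and "(\<lambda>x. \<integral>\<^sup>+f. \<integral>\<^sup>+g. ennreal (H (fst x) (snd x) f g) \<partial>mu (fst x) f \<partial>\<nu>) \<in> borel_measurable (borel \<Otimes>\<^sub>M borel)"
proof -
  interpret N: prob_space \<nu> by (rule pn)
  have idn[measurable]: "(\<lambda>x. x) \<in> measurable \<nu> borel" by (rule measurable_ident_sets[OF sn])
  let ?TT = "borel \<Otimes>\<^sub>M borel :: (real \<times> real) measure"
  have map1: "(\<lambda>p::((real \<times> real) \<times> 'f) \<times> 'f. ((fst (fst (fst p)), snd (fst (fst p))), (snd (fst p), snd p)))
      \<in> measurable ((?TT \<Otimes>\<^sub>M \<nu>) \<Otimes>\<^sub>M borel) ((borel \<Otimes>\<^sub>M borel) \<Otimes>\<^sub>M (borel \<Otimes>\<^sub>M borel))"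
    by measurable
  have Hc: "(\<lambda>(y, g). H (fst (fst y)) (snd (fst y)) (snd y) g) \<in> borel_measurable ((?TT \<Otimes>\<^sub>M \<nu>) \<Otimes>\<^sub>M borel)"
    using measurable_compose[OF map1 H] by (simp add: split_beta')
  have map2: "(\<lambda>y::(real \<times> real) \<times> 'f. (fst (fst y), snd y)) \<in> measurable (?TT \<Otimes>\<^sub>M \<nu>) (borel \<Otimes>\<^sub>M borel)"
    by measurable
  have K: "(\<lambda>y. mu (fst (fst y)) (snd y)) \<in> measurable (?TT \<Otimes>\<^sub>M \<nu>) (subprob_algebra borel)"
    using measurable_compose[OF map2 mk2] by simp
  have inner: "(\<lambda>y. \<integral>g. H (fst (fst y)) (snd (fst y)) (snd y) g \<partial>mu (fst (fst y)) (snd y)) \<in> borel_measurable (?TT \<Otimes>\<^sub>M \<nu>)"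
    by (rule meas_int_kernel[OF Hc K nn])
  then show "(\<lambda>x. \<integral>f. \<integral>g. H (fst x) (snd x) f g \<partial>mu (fst x) f \<partial>\<nu>) \<in> borel_measurable ?TT"
    by (intro N.borel_measurable_lebesgue_integral) (simp add: split_beta')
  have Hc': "(\<lambda>(y, g). ennreal (H (fst (fst y)) (snd (fst y)) (snd y) g)) \<in> borel_measurable ((?TT \<Otimes>\<^sub>M \<nu>) \<Otimes>\<^sub>M borel)"
    using Hc by measurable
  have inner': "(\<lambda>y. \<integral>\<^sup>+g. ennreal (H (fst (fst y)) (snd (fst y)) (snd y) g) \<partial>mu (fst (fst y)) (snd y)) \<in> borel_measurable (?TT \<Otimes>\<^sub>M \<nu>)"
    by (rule nn_integral_measurable_subprob_algebra2[OF Hc' K])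
  then show "(\<lambda>x. \<integral>\<^sup>+f. \<integral>\<^sup>+g. ennreal (H (fst x) (snd x) f g) \<partial>mu (fst x) f \<partial>\<nu>) \<in> borel_measurable ?TT"
    by (intro N.borel_measurable_nn_integral) (simp add: split_beta')
qed

lemma meas_RR:
  fixes G :: "real \<Rightarrow> real \<Rightarrow> 'f::{real_inner,polish_space} \<Rightarrow> real"
    and \<nu> :: "'f measure" and mu :: "real \<Rightarrow> 'f \<Rightarrow> 'f measure" and mum :: "real \<Rightarrow> 'f measure"
  assumes G: "(\<lambda>q::(real \<times> real) \<times> 'f. G (fst (fst q)) (snd (fst q)) (snd q))
      \<in> borel_measurable ((borel \<Otimes>\<^sub>M borel) \<Otimes>\<^sub>M borel)"
    and pn: "prob_space \<nu>" and sn: "sets \<nu> = sets borel"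
    and mk2: "(\<lambda>p. mu (fst p) (snd p)) \<in> measurable (borel \<Otimes>\<^sub>M borel) (subprob_algebra borel)"
    and mb: "\<And>t. mum t = \<nu> \<bind> (\<lambda>f. mu t f)"
    and nn: "\<And>t r g. 0 \<le> G t r g"
  shows "(\<lambda>x. \<integral>g. G (fst x) (snd x) g \<partial>mum (fst x)) \<in> borel_measurable (borel \<Otimes>\<^sub>M borel)"
    and "(\<lambda>x. \<integral>\<^sup>+g. ennreal (G (fst x) (snd x) g) \<partial>mum (fst x)) \<in> borel_measurable (borel \<Otimes>\<^sub>M borel)"
proof -
  interpret N: prob_space \<nu> by (rule pn)
  have idn[measurable]: "(\<lambda>x. x) \<in> measurable \<nu> borel" by (rule measurable_ident_sets[OF sn])
  let ?TT = "borel \<Otimes>\<^sub>M borel :: (real \<times> real) measure"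
  have map2: "(\<lambda>y::(real \<times> real) \<times> 'f. (fst (fst y), snd y)) \<in> measurable (?TT \<Otimes>\<^sub>M \<nu>) (borel \<Otimes>\<^sub>M borel)"
    by measurable
  have K: "(\<lambda>y. mu (fst (fst y)) (snd y)) \<in> measurable (?TT \<Otimes>\<^sub>M \<nu>) (subprob_algebra borel)"
    using measurable_compose[OF map2 mk2] by simp
  have nsp: "\<nu> \<in> space (subprob_algebra \<nu>)"
    by (simp add: space_subprob_algebra prob_space_imp_subprob_space pn)
  have KB: "(\<lambda>x. \<nu> \<bind> (\<lambda>f. mu (fst x) f)) \<in> measurable ?TT (subprob_algebra borel)"
    by (rule measurable_bind[OF measurable_const[OF nsp]]) (use K in simp)
  have KM: "(\<lambda>x. mum (fst x)) \<in> measurable ?TT (subprob_algebra borel)"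
    using KB by (simp add: mb)
  have Gc: "(\<lambda>(x, g). G (fst x) (snd x) g) \<in> borel_measurable (?TT \<Otimes>\<^sub>M borel)"
    using G by (simp add: split_beta')
  show "(\<lambda>x. \<integral>g. G (fst x) (snd x) g \<partial>mum (fst x)) \<in> borel_measurable ?TT"
    by (rule meas_int_kernel[OF Gc KM nn])
  have Gc': "(\<lambda>(x, g). ennreal (G (fst x) (snd x) g)) \<in> borel_measurable (?TT \<Otimes>\<^sub>M borel)"
    using Gc by measurable
  show "(\<lambda>x. \<integral>\<^sup>+g. ennreal (G (fst x) (snd x) g) \<partial>mum (fst x)) \<in> borel_measurable ?TT"
    by (rule nn_integral_measurable_subprob_algebra2[OF Gc' KM])
qed

lemma ennreal_integral_le_nn:
  fixes f :: "'a \<Rightarrow> real"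
  assumes "\<And>x. 0 \<le> f x"
  shows "ennreal (integral\<^sup>L M f) \<le> (\<integral>\<^sup>+x. ennreal (f x) \<partial>M)"
proof (cases "integrable M f")
  case True
  then show ?thesis using assms by (simp add: nn_integral_eq_integral)
next
  case False
  then show ?thesis by (simp add: not_integrable_integral_eq)
qed

lemma nn2_add:
  fixes h1 h2 :: "'a \<Rightarrow> 'b \<Rightarrow> ennreal" and K :: "'a \<Rightarrow> 'b measure"
  assumes K: "K \<in> measurable A (subprob_algebra B)"
    and h1: "(\<lambda>(f,g). h1 f g) \<in> borel_measurable (A \<Otimes>\<^sub>M B)"
    and h2: "(\<lambda>(f,g). h2 f g) \<in> borel_measurable (A \<Otimes>\<^sub>M B)"
  shows "(\<integral>\<^sup>+f. \<integral>\<^sup>+g. a * h1 f g + b * h2 f g \<partial>K f \<partial>A)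
       = a * (\<integral>\<^sup>+f. \<integral>\<^sup>+g. h1 f g \<partial>K f \<partial>A) + b * (\<integral>\<^sup>+f. \<integral>\<^sup>+g. h2 f g \<partial>K f \<partial>A)"
proof -
  have i1: "(\<lambda>f. \<integral>\<^sup>+g. h1 f g \<partial>K f) \<in> borel_measurable A"
    by (rule nn_integral_measurable_subprob_algebra2[OF h1 K])
  have i2: "(\<lambda>f. \<integral>\<^sup>+g. h2 f g \<partial>K f) \<in> borel_measurable A"
    by (rule nn_integral_measurable_subprob_algebra2[OF h2 K])
  have "(\<integral>\<^sup>+f. \<integral>\<^sup>+g. a * h1 f g + b * h2 f g \<partial>K f \<partial>A)
      = (\<integral>\<^sup>+f. a * (\<integral>\<^sup>+g. h1 f g \<partial>K f) + b * (\<integral>\<^sup>+g. h2 f g \<partial>K f) \<partial>A)"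
  proof (intro nn_integral_cong)
    fix f assume f: "f \<in> space A"
    have sK: "sets (K f) = sets B" using K f by (rule sets_kernel)
    have m1: "(\<lambda>g. h1 f g) \<in> borel_measurable (K f)"
      using measurable_Pair2[OF h1 f] by (simp add: measurable_cong_sets[OF sK refl])
    have m2: "(\<lambda>g. h2 f g) \<in> borel_measurable (K f)"
      using measurable_Pair2[OF h2 f] by (simp add: measurable_cong_sets[OF sK refl])
    show "(\<integral>\<^sup>+g. a * h1 f g + b * h2 f g \<partial>K f) = a * (\<integral>\<^sup>+g. h1 f g \<partial>K f) + b * (\<integral>\<^sup>+g. h2 f g \<partial>K f)"
      using m1 m2 by (simp add: nn_integral_add nn_integral_cmult)
  qed
  also have "\<dots> = a * (\<integral>\<^sup>+f. \<integral>\<^sup>+g. h1 f g \<partial>K f \<partial>A) + b * (\<integral>\<^sup>+f. \<integral>\<^sup>+g. h2 f g \<partial>K f \<partial>A)"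
    using i1 i2 by (simp add: nn_integral_add nn_integral_cmult)
  finally show ?thesis .
qed

lemma nn1_add:
  fixes h1 h2 :: "'b \<Rightarrow> ennreal"
  assumes "h1 \<in> borel_measurable M" "h2 \<in> borel_measurable M"
  shows "(\<integral>\<^sup>+g. a * h1 g + b * h2 g \<partial>M) = a * (\<integral>\<^sup>+g. h1 g \<partial>M) + b * (\<integral>\<^sup>+g. h2 g \<partial>M)"
  using assms by (simp add: nn_integral_add nn_integral_cmult)


lemma meas_norm_diff_sq:
  fixes f g :: "'a \<Rightarrow> 'b::{real_normed_vector, second_countable_topology}"
  assumes [measurable]: "f \<in> borel_measurable M" "g \<in> borel_measurable M"
  shows "(\<lambda>x. (norm (f x - g x))\<^sup>2) \<in> borel_measurable M"
    and "(\<lambda>x. ennreal ((norm (f x - g x))\<^sup>2)) \<in> borel_measurable M"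
  subgoal by measurable
  subgoal by measurable
  done

lemma meas_norm_sq:
  fixes f :: "'a \<Rightarrow> 'b::{real_normed_vector, second_countable_topology}"
  assumes [measurable]: "f \<in> borel_measurable M"
  shows "(\<lambda>x. (norm (f x))\<^sup>2) \<in> borel_measurable M"
    and "(\<lambda>x. ennreal ((norm (f x))\<^sup>2)) \<in> borel_measurable M"
  subgoal by measurable
  subgoal by measurable
  done

lemma meanflow_identity:
  fixes phi :: "real \<Rightarrow> 'f::real_normed_vector \<Rightarrow> 'f" and u :: "real \<Rightarrow> 'f \<Rightarrow> 'f"
  assumes phi_ode: "\<And>g t. t \<in> {0..1} \<Longrightarrow>
        ((\<lambda>s. phi s g) has_vector_derivative u t (phi t g)) (at t within {0..1})"
    and phi_bij: "\<And>t. t \<in> {0..1} \<Longrightarrow> bij (phi t)"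
    and der: "((\<lambda>(s, x). mean_velocity phi s r x) has_derivative
           (\<lambda>(a, v). a *\<^sub>R ubdt + Dv v)) (at (t, g))"
    and t: "0 < t" "t < r" "r < 1"
  shows "mean_velocity phi t r g = (r - t) *\<^sub>R (ubdt + Dv (u t g)) + u t g"
    and "bounded_linear Dv"
proof -
  have bl: "bounded_linear (\<lambda>(a, v). a *\<^sub>R ubdt + Dv v)"
    using der by (rule has_derivative_bounded_linear)
  have "bounded_linear (\<lambda>v. (\<lambda>(a, v). a *\<^sub>R ubdt + Dv v) ((0::real), v))"
    by (rule bounded_linear_compose[OF bl]) (intro bounded_linear_Pair bounded_linear_zero bounded_linear_ident)
  then show blD: "bounded_linear Dv" by simp
  interpret D: bounded_linear Dv by (rule blD)
  have t01: "t \<in> {0..1}" using t by auto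
  obtain x where gx: "g = phi t x" using phi_bij[OF t01] by (metis bij_pointE)
  have eq: "(r - s) *\<^sub>R mean_velocity phi s r (phi s x) = phi r x - phi s x" if s: "s \<in> {0..1}" for s
  proof (cases "s = r")
    case True then show ?thesis by simp
  next
    case False
    have "inv (phi s) (phi s x) = x" using phi_bij[OF s] by (simp add: bij_is_inj)
    then show ?thesis using False by (simp add: mean_velocity_def)
  qed
  have dg: "((\<lambda>s. (s, phi s x)) has_derivative (\<lambda>h. (h, h *\<^sub>R u t (phi t x)))) (at t within {0..1})"
    using phi_ode[OF t01, of x] unfolding has_vector_derivative_def
    by (intro has_derivative_Pair has_derivative_ident)
  have dU0: "((\<lambda>s. (\<lambda>(s, x). mean_velocity phi s r x) (s, phi s x)) has_derivative
      (\<lambda>h. (\<lambda>(a, v). a *\<^sub>R ubdt + Dv v) (h, h *\<^sub>R u t (phi t x)))) (at t within {0..1})"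
    by (rule has_derivative_compose[OF dg]) (use der gx in simp)
  have dU: "((\<lambda>s. mean_velocity phi s r (phi s x)) has_vector_derivative (ubdt + Dv (u t g))) (at t within {0..1})"
    using dU0 unfolding has_vector_derivative_def gx by (simp add: D.scaleR scaleR_add_right)
  have dL: "((\<lambda>s. (r - s) *\<^sub>R mean_velocity phi s r (phi s x)) has_vector_derivative
       ((r - t) *\<^sub>R (ubdt + Dv (u t g)) + (-1) *\<^sub>R mean_velocity phi t r (phi t x))) (at t within {0..1})"
    by (intro has_vector_derivative_scaleR dU derivative_eq_intros) auto
  have dR: "((\<lambda>s. phi r x - phi s x) has_vector_derivative
       ((r - t) *\<^sub>R (ubdt + Dv (u t g)) + (-1) *\<^sub>R mean_velocity phi t r (phi t x))) (at t within {0..1})"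
    by (rule has_vector_derivative_transform[OF t01 _ dL]) (simp add: eq)
  have dR2: "((\<lambda>s. phi r x - phi s x) has_vector_derivative (0 - u t g)) (at t within {0..1})"
    using phi_ode[OF t01, of x] gx by (intro derivative_eq_intros) auto
  have at: "at t within {0..1} = at t" using t by (intro at_within_Icc_at) auto
  have "(r - t) *\<^sub>R (ubdt + Dv (u t g)) + (-1) *\<^sub>R mean_velocity phi t r (phi t x) = 0 - u t g"
    using vector_derivative_unique_at[OF dR[unfolded at] dR2[unfolded at]] .
  then show "mean_velocity phi t r g = (r - t) *\<^sub>R (ubdt + Dv (u t g)) + u t g"
    using gx by (simp add: algebra_simps)
qed

theorem theorem2:
  fixes smin :: real
    and C0 :: "'f::{real_inner,polish_space} \<Rightarrow> 'f"
    and \<nu> :: "'f measure"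
    and mu :: "real \<Rightarrow> 'f \<Rightarrow> 'f measure"
    and mum :: "real \<Rightarrow> 'f measure"
    and rho :: "real \<Rightarrow> 'f \<Rightarrow> 'f \<Rightarrow> real"
    and phi :: "real \<Rightarrow> 'f \<Rightarrow> 'f"
    and ubdt :: "real \<Rightarrow> real \<Rightarrow> 'f \<Rightarrow> 'f"
    and Dub :: "real \<Rightarrow> real \<Rightarrow> 'f \<Rightarrow> 'f \<Rightarrow> 'f"
    and ubth :: "'p \<Rightarrow> real \<Rightarrow> real \<Rightarrow> 'f \<Rightarrow> 'f"
    and T :: "(real \<times> real) measure"
  assumes smin: "0 < smin" "smin < 1"
    and C0: "covariance_operator C0"
    and nu: "prob_space \<nu>" "sets \<nu> = sets borel"
    and nu_L2: "(\<integral>\<^sup>+ f. ennreal ((norm f)\<^sup>2) \<partial>\<nu>) < \<infinity>"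
    \<comment> \<open>conditional paths mu_t^f = N(t f, sigma_t^2 C0)\<close>
    and mu_gauss: "\<And>t f. gaussian_measure (mu t f) (t *\<^sub>R f) (\<lambda>x. (sigma_t smin t)\<^sup>2 *\<^sub>R C0 x)"
    and mu_kernel: "(\<lambda>(t, f). mu t f) \<in> measurable borel (subprob_algebra borel)"
    \<comment> \<open>marginal measure mu_t(A) = integral of mu_t^f(A) d nu(f)\<close>
    and mum_sets: "\<And>t. sets (mum t) = sets borel"
    and mum: "\<And>t A. A \<in> sets borel \<Longrightarrow> emeasure (mum t) A = (\<integral>\<^sup>+ f. emeasure (mu t f) A \<partial>\<nu>)"
    \<comment> \<open>rho_t^f = d mu_t^f / d mu_t (absolute continuity)\<close>
    and rho_nonneg: "\<And>t f g. 0 \<le> rho t f g"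
    and rho_meas: "(\<lambda>(t, f, g). rho t f g) \<in> borel_measurable borel"
    and rho_dens: "AE f in \<nu>. \<forall>t\<in>{0..1}. mu t f = density (mum t) (\<lambda>g. ennreal (rho t f g))"
    \<comment> \<open>marginal flow: d/dt phi_t(g) = u_t(phi_t(g)), phi_0 = Id, phi_t invertible\<close>
    and phi0: "\<And>g. phi 0 g = g"
    and phi_ode: "\<And>g t. t \<in> {0..1} \<Longrightarrow>
        ((\<lambda>s. phi s g) has_vector_derivative marginal_velocity \<nu> rho smin t (phi t g)) (at t within {0..1})"
    and phi_bij: "\<And>t. t \<in> {0..1} \<Longrightarrow> bij (phi t)"
    \<comment> \<open>(Frechet) differentiability of (t,g) |-> ubar_{t->r}(g): partial derivatives ubdt (in t) and Dub (in g)\<close>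
    and ubar_deriv: "\<And>t r g. 0 < t \<Longrightarrow> t < r \<Longrightarrow> r < 1 \<Longrightarrow>
        ((\<lambda>(s, x). mean_velocity phi s r x) has_derivative
           (\<lambda>(a, v). a *\<^sub>R ubdt t r g + Dub t r g v)) (at (t, g))"
    \<comment> \<open>distribution of (t, r) on {0 < t < r < 1}\<close>
    and T: "prob_space T" "sets T = sets borel"
    and T_supp: "AE (t, r) in T. 0 < t \<and> t < r \<and> r < 1"
    \<comment> \<open>measurability of the quantities inside the norms\<close>
    and meas_ubar: "(\<lambda>((t, r), g). mean_velocity phi t r g) \<in> borel_measurable borel"
    and meas_ubth: "\<And>\<theta>. (\<lambda>((t, r), g). ubth \<theta> t r g) \<in> borel_measurable borel"
    and meas_D: "(\<lambda>((t, r), f, g). ubdt t r g + Dub t r g (cond_velocity smin t f g)) \<in> borel_measurable borel"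
    \<comment> \<open>square integrability of the quantities inside the norms\<close>
    and L2_ubar: "(\<integral>\<^sup>+ (t, r). (\<integral>\<^sup>+ g. ennreal ((norm (mean_velocity phi t r g))\<^sup>2) \<partial>mum t) \<partial>T) < \<infinity>"
    and L2_ubth: "\<And>\<theta>. (\<integral>\<^sup>+ (t, r). (\<integral>\<^sup>+ g. ennreal ((norm (ubth \<theta> t r g))\<^sup>2) \<partial>mum t) \<partial>T) < \<infinity>"
    and L2_ubth_c: "\<And>\<theta>. (\<integral>\<^sup>+ (t, r). (\<integral>\<^sup>+ f. (\<integral>\<^sup>+ g. ennreal ((norm (ubth \<theta> t r g))\<^sup>2) \<partial>mu t f) \<partial>\<nu>) \<partial>T) < \<infinity>"
    and L2_D: "(\<integral>\<^sup>+ (t, r). (\<integral>\<^sup>+ f. (\<integral>\<^sup>+ g.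
        ennreal ((norm (ubdt t r g + Dub t r g (cond_velocity smin t f g)))\<^sup>2) \<partial>mu t f) \<partial>\<nu>) \<partial>T) < \<infinity>"
    and L2_uf: "(\<integral>\<^sup>+ (t, r). (\<integral>\<^sup>+ f. (\<integral>\<^sup>+ g.
        ennreal ((norm (cond_velocity smin t f g))\<^sup>2) \<partial>mu t f) \<partial>\<nu>) \<partial>T) < \<infinity>"
  shows "\<exists>C::real. \<forall>\<theta>.
      (\<integral>(t, r). (\<integral>f. (\<integral>g.
          (norm ((r - t) *\<^sub>R (ubdt t r g + Dub t r g (cond_velocity smin t f g))
                 + cond_velocity smin t f g - ubth \<theta> t r g))\<^sup>2 \<partial>mu t f) \<partial>\<nu>) \<partial>T)
    = (\<integral>(t, r). (\<integral>g. (norm (mean_velocity phi t r g - ubth \<theta> t r g))\<^sup>2 \<partial>mum t) \<partial>T) + C"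
proof -
  interpret N: prob_space \<nu> by (rule nu(1))
  interpret Tp: prob_space T by (rule T(1))
  have spn: "space \<nu> = UNIV" using sets_eq_imp_space_eq[OF nu(2)] by simp
  have spT: "space T = UNIV" using sets_eq_imp_space_eq[OF T(2)] by simp
  have pmu: "prob_space (mu t f)" and smu: "sets (mu t f) = sets borel" for t f
    using mu_gauss[of t f] by (auto simp: gaussian_measure_def)
  have smum: "space (mum t) = UNIV" for t using sets_eq_imp_space_eq[OF mum_sets[of t]] by simp
  have idn: "(\<lambda>x. x) \<in> measurable \<nu> borel" by (rule measurable_ident_sets[OF nu(2)])
  have idm: "(\<lambda>x. x) \<in> measurable (mum t) borel" for t by (rule measurable_ident_sets[OF mum_sets])
  have mk2: "(\<lambda>p. mu (fst p) (snd p)) \<in> measurable (borel \<Otimes>\<^sub>M borel) (subprob_algebra borel)"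
    using mu_kernel unfolding borel_prod by (simp add: split_beta')
  have Kt: "(\<lambda>f. mu t f) \<in> measurable \<nu> (subprob_algebra borel)" for t
  proof -
    have "(\<lambda>f. (t, f)) \<in> measurable \<nu> (borel \<Otimes>\<^sub>M borel)"
      by (rule measurable_Pair[OF measurable_const idn]) simp
    from measurable_compose[OF this mk2] show ?thesis by simp
  qed
  have mum_bind: "mum t = \<nu> \<bind> (\<lambda>f. mu t f)" for t
  proof (rule measure_eqI)
    have ne: "space \<nu> \<noteq> {}" using spn by simp
    show ss: "sets (mum t) = sets (\<nu> \<bind> (\<lambda>f. mu t f))"
      using sets_bind[of \<nu> "\<lambda>f. mu t f" borel, OF _ ne] smu mum_sets by simp
    fix A assume "A \<in> sets (mum t)"
    then have A: "A \<in> sets borel" using mum_sets by simp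
    show "emeasure (mum t) A = emeasure (\<nu> \<bind> (\<lambda>f. mu t f)) A"
      using emeasure_bind[OF ne Kt A] mum[OF A] by simp
  qed
  have pmum: "prob_space (mum t)" for t
  proof
    have "emeasure (mum t) UNIV = (\<integral>\<^sup>+ f. emeasure (mu t f) UNIV \<partial>\<nu>)" using mum[of UNIV t] by simp
    also have "\<dots> = (\<integral>\<^sup>+ f. 1 \<partial>\<nu>)"
      using prob_space.emeasure_space_1[OF pmu] sets_eq_imp_space_eq[OF smu]
      by (intro nn_integral_cong) (metis space_borel)
    also have "\<dots> = 1" by (simp add: N.emeasure_space_1)
    finally show "emeasure (mum t) (space (mum t)) = 1" using smum by simp
  qed
  have nn_mum: "(\<integral>\<^sup>+g. h g \<partial>mum t) = (\<integral>\<^sup>+f. \<integral>\<^sup>+g. h g \<partial>mu t f \<partial>\<nu>)"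
    if "h \<in> borel_measurable borel" for h t
    unfolding mum_bind by (rule nn_integral_bind[OF that Kt])

  have pairsets: "sets (\<nu> \<Otimes>\<^sub>M mum t) = sets (borel \<Otimes>\<^sub>M borel)" for t
    by (rule sets_pair_measure_cong[OF nu(2) mum_sets])
  have pairsets': "sets (mum t \<Otimes>\<^sub>M \<nu>) = sets (borel \<Otimes>\<^sub>M borel)" for t
    by (rule sets_pair_measure_cong[OF mum_sets nu(2)])
  have mrho3[measurable]: "(\<lambda>p. rho (fst p) (fst (snd p)) (snd (snd p))) \<in> borel_measurable (borel \<Otimes>\<^sub>M (borel \<Otimes>\<^sub>M borel))"
    using rho_meas by (simp add: borel_prod split_beta')
  have mrho_t: "(\<lambda>(f,g). rho t f g) \<in> borel_measurable (\<nu> \<Otimes>\<^sub>M mum t)" for t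
  proof -
    have "(\<lambda>p. rho t (fst p) (snd p)) \<in> borel_measurable (borel \<Otimes>\<^sub>M borel)"
      using measurable_Pair2[OF mrho3, of t] by simp
    then show ?thesis by (simp add: measurable_cong_sets[OF pairsets refl] split_beta')
  qed
  have rho1: "AE g in mum t. (\<integral>\<^sup>+f. ennreal (rho t f g) \<partial>\<nu>) = 1" if t01: "t \<in> {0..1}" for t
  proof -
    interpret Mt: prob_space "mum t" by (rule pmum)
    interpret PP: pair_prob_space \<nu> "mum t" ..
    have mr[measurable]: "(\<lambda>(f,g). rho t f g) \<in> borel_measurable (\<nu> \<Otimes>\<^sub>M mum t)" by (rule mrho_t)
    show ?thesis
    proof (rule Mt.density_unique2)
      show "(\<lambda>g. \<integral>\<^sup>+f. ennreal (rho t f g) \<partial>\<nu>) \<in> borel_measurable (mum t)" by measurable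
      show "(\<lambda>g. 1) \<in> borel_measurable (mum t)" by simp
      fix A assume A[measurable]: "A \<in> sets (mum t)"
      have Ab: "A \<in> sets borel" using A mum_sets by simp
      have "(\<integral>\<^sup>+g\<in>A. (\<integral>\<^sup>+f. ennreal (rho t f g) \<partial>\<nu>) \<partial>mum t)
          = (\<integral>\<^sup>+g. \<integral>\<^sup>+f. ennreal (rho t f g) * indicator A g \<partial>\<nu> \<partial>mum t)"
        by (intro nn_integral_cong) (simp add: nn_integral_multc)
      also have "\<dots> = (\<integral>\<^sup>+f. \<integral>\<^sup>+g. ennreal (rho t f g) * indicator A g \<partial>mum t \<partial>\<nu>)"
        by (intro PP.Fubini') measurable
      also have "\<dots> = (\<integral>\<^sup>+f. emeasure (mu t f) A \<partial>\<nu>)"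
        using rho_dens
      proof (intro nn_integral_cong_AE, eventually_elim)
        case (elim f)
        then have eq: "mu t f = density (mum t) (\<lambda>g. ennreal (rho t f g))" using t01 by blast
        have "(\<lambda>g. ennreal (rho t f g)) \<in> borel_measurable (mum t)"
          using measurable_Pair2[OF mr, of f] spn by simp
        then show ?case unfolding eq using A by (simp add: emeasure_density)
      qed
      also have "\<dots> = emeasure (mum t) A" using mum[OF Ab] by simp
      also have "\<dots> = (\<integral>\<^sup>+g\<in>A. 1 \<partial>mum t)" using A by simp
      finally show "(\<integral>\<^sup>+g\<in>A. (\<integral>\<^sup>+f. ennreal (rho t f g) \<partial>\<nu>) \<partial>mum t) = (\<integral>\<^sup>+g\<in>A. 1 \<partial>mum t)" .
    qed
  qed

  let ?TT = "borel \<Otimes>\<^sub>M borel :: (real \<times> real) measure"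
  have sT: "sets T = sets ?TT" unfolding borel_prod by (rule T(2))
  have mDf4: "(\<lambda>q::(real \<times> real) \<times> 'f \<times> 'f. ubdt (fst (fst q)) (snd (fst q)) (snd (snd q))
      + Dub (fst (fst q)) (snd (fst q)) (snd (snd q)) (cond_velocity smin (fst (fst q)) (fst (snd q)) (snd (snd q))))
      \<in> borel_measurable ((borel \<Otimes>\<^sub>M borel) \<Otimes>\<^sub>M (borel \<Otimes>\<^sub>M borel))"
    using meas_D by (simp add: borel_prod split_beta')
  have muf4: "(\<lambda>q::(real \<times> real) \<times> 'f \<times> 'f. cond_velocity smin (fst (fst q)) (fst (snd q)) (snd (snd q)))
      \<in> borel_measurable ((borel \<Otimes>\<^sub>M borel) \<Otimes>\<^sub>M (borel \<Otimes>\<^sub>M borel))"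
    unfolding cond_velocity_def by measurable
  have mU3: "(\<lambda>q::(real \<times> real) \<times> 'f. mean_velocity phi (fst (fst q)) (snd (fst q)) (snd q))
      \<in> borel_measurable ((borel \<Otimes>\<^sub>M borel) \<Otimes>\<^sub>M borel)"
    using meas_ubar by (simp add: borel_prod split_beta')
  have mT3: "(\<lambda>q::(real \<times> real) \<times> 'f. ubth \<theta> (fst (fst q)) (snd (fst q)) (snd q))
      \<in> borel_measurable ((borel \<Otimes>\<^sub>M borel) \<Otimes>\<^sub>M borel)" for \<theta>
    using meas_ubth[of \<theta>] by (simp add: borel_prod split_beta')
  have map34: "(\<lambda>q::(real \<times> real) \<times> 'f \<times> 'f. (fst q, snd (snd q)))
      \<in> measurable ((borel \<Otimes>\<^sub>M borel) \<Otimes>\<^sub>M (borel \<Otimes>\<^sub>M borel)) ((borel \<Otimes>\<^sub>M borel) \<Otimes>\<^sub>M borel)"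
    by measurable
  have mT4: "(\<lambda>q::(real \<times> real) \<times> 'f \<times> 'f. ubth \<theta> (fst (fst q)) (snd (fst q)) (snd (snd q)))
      \<in> borel_measurable ((borel \<Otimes>\<^sub>M borel) \<Otimes>\<^sub>M (borel \<Otimes>\<^sub>M borel))" for \<theta>
    using measurable_compose[OF map34 mT3[of \<theta>]] by simp
  define XX where "XX t r f g = (r - t) *\<^sub>R (ubdt t r g + Dub t r g (cond_velocity smin t f g)) + cond_velocity smin t f g"
    for t r f g
  have mXX4: "(\<lambda>q::(real \<times> real) \<times> 'f \<times> 'f. XX (fst (fst q)) (snd (fst q)) (fst (snd q)) (snd (snd q)))
      \<in> borel_measurable ((borel \<Otimes>\<^sub>M borel) \<Otimes>\<^sub>M (borel \<Otimes>\<^sub>M borel))"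
  proof -
    have ms: "(\<lambda>q::(real \<times> real) \<times> 'f \<times> 'f. snd (fst q) - fst (fst q))
      \<in> borel_measurable ((borel \<Otimes>\<^sub>M borel) \<Otimes>\<^sub>M (borel \<Otimes>\<^sub>M borel))" by measurable
    show ?thesis unfolding XX_def
      by (intro borel_measurable_add borel_measurable_scaleR ms mDf4 muf4)
  qed
  have mLL: "(\<lambda>x. \<integral>f. \<integral>g. (norm (XX (fst x) (snd x) f g - ubth \<theta> (fst x) (snd x) g))\<^sup>2 \<partial>mu (fst x) f \<partial>\<nu>) \<in> borel_measurable T" for \<theta>
  proof -
    note [measurable] = mT3[of \<theta>] mT4[of \<theta>]
    show ?thesis
      unfolding measurable_cong_sets[OF sT refl]
      by (rule meas_LL(1)[OF _ nu mk2]) (rule meas_norm_diff_sq(1)[OF mXX4 mT4[of \<theta>]], simp)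
  qed
  have mC1: "(\<lambda>x. \<integral>f. \<integral>g. (norm (XX (fst x) (snd x) f g))\<^sup>2 \<partial>mu (fst x) f \<partial>\<nu>) \<in> borel_measurable T"
    unfolding measurable_cong_sets[OF sT refl]
    by (rule meas_LL(1)[OF _ nu mk2]) (rule meas_norm_sq(1)[OF mXX4], simp)
  have mFD: "(\<lambda>x. \<integral>\<^sup>+f. \<integral>\<^sup>+g. ennreal ((norm (ubdt (fst x) (snd x) g + Dub (fst x) (snd x) g (cond_velocity smin (fst x) f g)))\<^sup>2) \<partial>mu (fst x) f \<partial>\<nu>) \<in> borel_measurable T"
    unfolding measurable_cong_sets[OF sT refl]
    by (rule meas_LL(2)[OF _ nu mk2]) (rule meas_norm_sq(1)[OF mDf4], simp)
  have mFuf: "(\<lambda>x. \<integral>\<^sup>+f. \<integral>\<^sup>+g. ennreal ((norm (cond_velocity smin (fst x) f g))\<^sup>2) \<partial>mu (fst x) f \<partial>\<nu>) \<in> borel_measurable T"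
    unfolding measurable_cong_sets[OF sT refl]
    by (rule meas_LL(2)[OF _ nu mk2]) (rule meas_norm_sq(1)[OF muf4], simp)
  have mRR: "(\<lambda>x. \<integral>g. (norm (mean_velocity phi (fst x) (snd x) g - ubth \<theta> (fst x) (snd x) g))\<^sup>2 \<partial>mum (fst x)) \<in> borel_measurable T" for \<theta>
  proof -
    note [measurable] = mT3[of \<theta>] mT4[of \<theta>]
    show ?thesis
      unfolding measurable_cong_sets[OF sT refl]
      by (rule meas_RR(1)[OF _ nu mk2 mum_bind]) (rule meas_norm_diff_sq(1)[OF mU3 mT3[of \<theta>]], simp)
  qed
  have mC2: "(\<lambda>x. \<integral>g. (norm (mean_velocity phi (fst x) (snd x) g))\<^sup>2 \<partial>mum (fst x)) \<in> borel_measurable T"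
    unfolding measurable_cong_sets[OF sT refl]
    by (rule meas_RR(1)[OF _ nu mk2 mum_bind]) (rule meas_norm_sq(1)[OF mU3], simp)
  have mFU: "(\<lambda>x. \<integral>\<^sup>+g. ennreal ((norm (mean_velocity phi (fst x) (snd x) g))\<^sup>2) \<partial>mum (fst x)) \<in> borel_measurable T"
    unfolding measurable_cong_sets[OF sT refl]
    by (rule meas_RR(2)[OF _ nu mk2 mum_bind]) (rule meas_norm_sq(1)[OF mU3], simp)
  have mFT: "(\<lambda>x. \<integral>\<^sup>+g. ennreal ((norm (ubth \<theta> (fst x) (snd x) g))\<^sup>2) \<partial>mum (fst x)) \<in> borel_measurable T" for \<theta>
  proof -
    note [measurable] = mT3[of \<theta>] mT4[of \<theta>]
    show ?thesis
      unfolding measurable_cong_sets[OF sT refl]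
      by (rule meas_RR(2)[OF _ nu mk2 mum_bind]) (rule meas_norm_sq(1)[OF mT3[of \<theta>]], simp)
  qed

  have XXb: "(\<integral>\<^sup>+f. \<integral>\<^sup>+g. ennreal ((norm (XX t r f g))\<^sup>2) \<partial>mu t f \<partial>\<nu>)
      \<le> 2 * (\<integral>\<^sup>+f. \<integral>\<^sup>+g. ennreal ((norm (ubdt t r g + Dub t r g (cond_velocity smin t f g)))\<^sup>2) \<partial>mu t f \<partial>\<nu>)
          + 2 * (\<integral>\<^sup>+f. \<integral>\<^sup>+g. ennreal ((norm (cond_velocity smin t f g))\<^sup>2) \<partial>mu t f \<partial>\<nu>)"
    if tr: "0 < t" "t < r" "r < 1" for t r
  proof -
    have sp2: "sets (\<nu> \<Otimes>\<^sub>M borel) = sets (borel \<Otimes>\<^sub>M borel)"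
      by (rule sets_pair_measure_cong[OF nu(2) refl])
    have slice2: "(\<lambda>(f,g). h t r f g) \<in> borel_measurable (\<nu> \<Otimes>\<^sub>M borel)"
      if hm: "(\<lambda>q::(real \<times> real) \<times> 'f \<times> 'f. h (fst (fst q)) (snd (fst q)) (fst (snd q)) (snd (snd q)))
          \<in> borel_measurable ((borel \<Otimes>\<^sub>M borel) \<Otimes>\<^sub>M (borel \<Otimes>\<^sub>M borel))"
      for h :: "real \<Rightarrow> real \<Rightarrow> 'f \<Rightarrow> 'f \<Rightarrow> 'f"
    proof -
      have "(\<lambda>p. h t r (fst p) (snd p)) \<in> borel_measurable (borel \<Otimes>\<^sub>M borel)"
        using measurable_Pair2[OF hm, of "(t, r)"] by (simp add: space_pair_measure)
      then show ?thesis
        by (simp add: measurable_cong_sets[OF sp2 refl] split_beta')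
    qed
    have "(\<integral>\<^sup>+f. \<integral>\<^sup>+g. ennreal ((norm (XX t r f g))\<^sup>2) \<partial>mu t f \<partial>\<nu>)
        \<le> (\<integral>\<^sup>+f. \<integral>\<^sup>+g. 2 * ennreal ((norm (ubdt t r g + Dub t r g (cond_velocity smin t f g)))\<^sup>2)
              + 2 * ennreal ((norm (cond_velocity smin t f g))\<^sup>2) \<partial>mu t f \<partial>\<nu>)"
    proof (intro nn_integral_mono)
      fix f g
      let ?D = "ubdt t r g + Dub t r g (cond_velocity smin t f g)" and ?u = "cond_velocity smin t f g"
      have "(norm (XX t r f g))\<^sup>2 \<le> 2 * (norm ((r - t) *\<^sub>R ?D))\<^sup>2 + 2 * (norm ?u)\<^sup>2"
        unfolding XX_def by (rule norm_add_sq_le)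
      also have "(norm ((r - t) *\<^sub>R ?D))\<^sup>2 = (r - t)\<^sup>2 * (norm ?D)\<^sup>2"
        by (simp add: power_mult_distrib)
      also have "(r - t)\<^sup>2 * (norm ?D)\<^sup>2 \<le> 1 * (norm ?D)\<^sup>2"
        using tr by (intro mult_right_mono) (auto simp: power_le_one abs_le_iff power2_le_iff_abs_le)
      finally have "(norm (XX t r f g))\<^sup>2 \<le> 2 * (norm ?D)\<^sup>2 + 2 * (norm ?u)\<^sup>2" by simp
      then have "ennreal ((norm (XX t r f g))\<^sup>2) \<le> ennreal (2 * (norm ?D)\<^sup>2 + 2 * (norm ?u)\<^sup>2)"
        by (rule ennreal_leI)
      also have "\<dots> = 2 * ennreal ((norm ?D)\<^sup>2) + 2 * ennreal ((norm ?u)\<^sup>2)"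
        by (simp add: ennreal_plus ennreal_mult)
      finally show "ennreal ((norm (XX t r f g))\<^sup>2) \<le> 2 * ennreal ((norm ?D)\<^sup>2) + 2 * ennreal ((norm ?u)\<^sup>2)" .
    qed
    also have "\<dots> = 2 * (\<integral>\<^sup>+f. \<integral>\<^sup>+g. ennreal ((norm (ubdt t r g + Dub t r g (cond_velocity smin t f g)))\<^sup>2) \<partial>mu t f \<partial>\<nu>)
        + 2 * (\<integral>\<^sup>+f. \<integral>\<^sup>+g. ennreal ((norm (cond_velocity smin t f g))\<^sup>2) \<partial>mu t f \<partial>\<nu>)"
    proof (rule nn2_add[OF Kt])
      have a: "(\<lambda>(f,g). ubdt t r g + Dub t r g (cond_velocity smin t f g)) \<in> borel_measurable (\<nu> \<Otimes>\<^sub>M borel)"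
        by (rule slice2[of "\<lambda>t r f g. ubdt t r g + Dub t r g (cond_velocity smin t f g)", OF mDf4])
      have b: "(\<lambda>(f,g). cond_velocity smin t f g) \<in> borel_measurable (\<nu> \<Otimes>\<^sub>M borel)"
        by (rule slice2[of "\<lambda>t r f g. cond_velocity smin t f g", OF muf4])
      show "(\<lambda>(f,g). ennreal ((norm (ubdt t r g + Dub t r g (cond_velocity smin t f g)))\<^sup>2)) \<in> borel_measurable (\<nu> \<Otimes>\<^sub>M borel)"
        using meas_norm_sq(2)[OF a] by (simp add: split_beta')
      show "(\<lambda>(f,g). ennreal ((norm (cond_velocity smin t f g))\<^sup>2)) \<in> borel_measurable (\<nu> \<Otimes>\<^sub>M borel)"
        using meas_norm_sq(2)[OF b] by (simp add: split_beta')
    qed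
    finally show ?thesis .
  qed
  have PW: "(\<integral>f. \<integral>g. (norm (XX t r f g - ubth \<theta> t r g))\<^sup>2 \<partial>mu t f \<partial>\<nu>)
      = (\<integral>g. (norm (mean_velocity phi t r g - ubth \<theta> t r g))\<^sup>2 \<partial>mum t)
        + ((\<integral>f. \<integral>g. (norm (XX t r f g))\<^sup>2 \<partial>mu t f \<partial>\<nu>) - (\<integral>g. (norm (mean_velocity phi t r g))\<^sup>2 \<partial>mum t))"
    if tr: "0 < t" "t < r" "r < 1"
      and fD: "(\<integral>\<^sup>+f. \<integral>\<^sup>+g. ennreal ((norm (ubdt t r g + Dub t r g (cond_velocity smin t f g)))\<^sup>2) \<partial>mu t f \<partial>\<nu>) \<noteq> \<infinity>"
      and fY: "(\<integral>\<^sup>+f. \<integral>\<^sup>+g. ennreal ((norm (cond_velocity smin t f g))\<^sup>2) \<partial>mu t f \<partial>\<nu>) \<noteq> \<infinity>"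
      and fU: "(\<integral>\<^sup>+g. ennreal ((norm (mean_velocity phi t r g))\<^sup>2) \<partial>mum t) \<noteq> \<infinity>"
      and fT: "(\<integral>\<^sup>+g. ennreal ((norm (ubth \<theta> t r g))\<^sup>2) \<partial>mum t) \<noteq> \<infinity>"
    for t r \<theta>
  proof -
    have t01: "t \<in> {0..1}" using tr by auto
    have sp2: "sets (\<nu> \<Otimes>\<^sub>M borel) = sets (borel \<Otimes>\<^sub>M borel)"
      by (rule sets_pair_measure_cong[OF nu(2) refl])
    have slice: "(\<lambda>(f,g). h t r f g) \<in> borel_measurable (\<nu> \<Otimes>\<^sub>M mum t)"
      and slice2: "(\<lambda>(f,g). h t r f g) \<in> borel_measurable (\<nu> \<Otimes>\<^sub>M borel)"
      if hm: "(\<lambda>q::(real \<times> real) \<times> 'f \<times> 'f. h (fst (fst q)) (snd (fst q)) (fst (snd q)) (snd (snd q)))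
          \<in> borel_measurable ((borel \<Otimes>\<^sub>M borel) \<Otimes>\<^sub>M (borel \<Otimes>\<^sub>M borel))"
      for h :: "real \<Rightarrow> real \<Rightarrow> 'f \<Rightarrow> 'f \<Rightarrow> 'z::{real_normed_vector, second_countable_topology}"
    proof -
      have "(\<lambda>p. h t r (fst p) (snd p)) \<in> borel_measurable (borel \<Otimes>\<^sub>M borel)"
        using measurable_Pair2[OF hm, of "(t, r)"] by (simp add: space_pair_measure)
      then show "(\<lambda>(f,g). h t r f g) \<in> borel_measurable (\<nu> \<Otimes>\<^sub>M mum t)"
        and "(\<lambda>(f,g). h t r f g) \<in> borel_measurable (\<nu> \<Otimes>\<^sub>M borel)"
        by (simp_all add: measurable_cong_sets[OF pairsets refl] measurable_cong_sets[OF sp2 refl] split_beta')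
    qed
    have slice1: "h t r \<in> borel_measurable (mum t)"
      if hm: "(\<lambda>q::(real \<times> real) \<times> 'f. h (fst (fst q)) (snd (fst q)) (snd q))
          \<in> borel_measurable ((borel \<Otimes>\<^sub>M borel) \<Otimes>\<^sub>M borel)"
      for h :: "real \<Rightarrow> real \<Rightarrow> 'f \<Rightarrow> 'f"
      using measurable_Pair2[OF hm, of "(t, r)"] by (simp add: measurable_cong_sets[OF mum_sets refl] space_pair_measure)
    have mX: "(\<lambda>(f,g). XX t r f g) \<in> borel_measurable (\<nu> \<Otimes>\<^sub>M mum t)" by (rule slice[OF mXX4])
    have mY: "(\<lambda>(f,g). cond_velocity smin t f g) \<in> borel_measurable (\<nu> \<Otimes>\<^sub>M mum t)"
      by (rule slice[of "\<lambda>t r f g. cond_velocity smin t f g", OF muf4])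
    have mU: "mean_velocity phi t r \<in> borel_measurable (mum t)"
      by (rule slice1[of "\<lambda>t r g. mean_velocity phi t r g", OF mU3])
    have mTh: "ubth \<theta> t r \<in> borel_measurable (mum t)"
      by (rule slice1[of "\<lambda>t r g. ubth \<theta> t r g", OF mT3])
    have K: "(\<lambda>f. mu t f) \<in> measurable \<nu> (subprob_algebra (mum t))"
      using Kt[of t] by (simp add: subprob_algebra_cong[OF mum_sets])
    have Kd: "AE f in \<nu>. mu t f = density (mum t) (\<lambda>g. ennreal (rho t f g))"
      using rho_dens t01 by (auto elim!: eventually_mono)
    have MF: "mean_velocity phi t r g = (r - t) *\<^sub>R (ubdt t r g + Dub t r g (marginal_velocity \<nu> rho smin t g))
              + marginal_velocity \<nu> rho smin t g"
      and blD: "bounded_linear (Dub t r g)" for g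
      using meanflow_identity[where u="\<lambda>t g. marginal_velocity \<nu> rho smin t g", OF phi_ode phi_bij ubar_deriv[OF tr] tr]
      by auto
    have fX: "(\<integral>\<^sup>+f. \<integral>\<^sup>+g. ennreal ((norm (XX t r f g))\<^sup>2) \<partial>mu t f \<partial>\<nu>) < \<infinity>"
    proof -
      note XXb[OF tr]
      also have "2 * (\<integral>\<^sup>+f. \<integral>\<^sup>+g. ennreal ((norm (ubdt t r g + Dub t r g (cond_velocity smin t f g)))\<^sup>2) \<partial>mu t f \<partial>\<nu>)
          + 2 * (\<integral>\<^sup>+f. \<integral>\<^sup>+g. ennreal ((norm (cond_velocity smin t f g))\<^sup>2) \<partial>mu t f \<partial>\<nu>) < \<infinity>"
        using fD fY by (simp add: less_top[symmetric] ennreal_mult_eq_top_iff)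
      finally show ?thesis .
    qed
    show ?thesis
    proof (rule pointwise[where K="\<lambda>f. mu t f" and W="\<lambda>f g. rho t f g" and Y="\<lambda>f g. cond_velocity smin t f g"
          and A="\<lambda>g. (r - t) *\<^sub>R ubdt t r g" and L="\<lambda>g v. (r - t) *\<^sub>R Dub t r g v + v"])
      show "prob_space \<nu>" "prob_space (mum t)" "sets \<nu> = sets borel" "sets (mum t) = sets borel"
        using nu pmum mum_sets by auto
      show "(\<lambda>f. mu t f) \<in> measurable \<nu> (subprob_algebra (mum t))" by (rule K)
      show "AE f in \<nu>. mu t f = density (mum t) (\<lambda>g. ennreal (rho t f g))" by (rule Kd)
      show "\<And>f g. 0 \<le> rho t f g" by (rule rho_nonneg)
      show "(\<lambda>(f,g). rho t f g) \<in> borel_measurable (\<nu> \<Otimes>\<^sub>M mum t)" by (rule mrho_t)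
      show "(\<lambda>(f,g). XX t r f g) \<in> borel_measurable (\<nu> \<Otimes>\<^sub>M mum t)" by (rule mX)
      show "(\<lambda>(f,g). cond_velocity smin t f g) \<in> borel_measurable (\<nu> \<Otimes>\<^sub>M mum t)" by (rule mY)
      show "mean_velocity phi t r \<in> borel_measurable (mum t)" by (rule mU)
      show "ubth \<theta> t r \<in> borel_measurable (mum t)" by (rule mTh)
      show "AE g in mum t. (\<integral>\<^sup>+f. ennreal (rho t f g) \<partial>\<nu>) = 1" by (rule rho1[OF t01])
      show "\<And>f g. XX t r f g = (r - t) *\<^sub>R ubdt t r g + ((r - t) *\<^sub>R Dub t r g (cond_velocity smin t f g) + cond_velocity smin t f g)"
        by (simp add: XX_def scaleR_add_right)
      show "\<And>g. mean_velocity phi t r g = (r - t) *\<^sub>R ubdt t r g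
          + ((r - t) *\<^sub>R Dub t r g (\<integral>f. rho t f g *\<^sub>R cond_velocity smin t f g \<partial>\<nu>) + (\<integral>f. rho t f g *\<^sub>R cond_velocity smin t f g \<partial>\<nu>))"
        using MF by (simp add: marginal_velocity_def scaleR_add_right)
      show "\<And>g. bounded_linear (\<lambda>v. (r - t) *\<^sub>R Dub t r g v + v)"
        by (intro bounded_linear_add bounded_linear_ident bounded_linear_compose[OF bounded_linear_scaleR_right blD])
      show "(\<integral>\<^sup>+f. \<integral>\<^sup>+g. ennreal ((norm (XX t r f g))\<^sup>2) \<partial>mu t f \<partial>\<nu>) < \<infinity>" by (rule fX)
      show "(\<integral>\<^sup>+f. \<integral>\<^sup>+g. ennreal ((norm (cond_velocity smin t f g))\<^sup>2) \<partial>mu t f \<partial>\<nu>) < \<infinity>"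
        using fY by (simp add: less_top)
      show "(\<integral>\<^sup>+g. ennreal ((norm (mean_velocity phi t r g))\<^sup>2) \<partial>mum t) < \<infinity>"
        using fU by (simp add: less_top)
      show "(\<integral>\<^sup>+g. ennreal ((norm (ubth \<theta> t r g))\<^sup>2) \<partial>mum t) < \<infinity>"
        using fT by (simp add: less_top)
    qed
  qed

  have aeS: "AE x in T. 0 < fst x \<and> fst x < snd x \<and> snd x < 1"
    using T_supp by (simp add: split_beta')
  have aeD: "AE x in T. (\<integral>\<^sup>+f. \<integral>\<^sup>+g. ennreal ((norm (ubdt (fst x) (snd x) g + Dub (fst x) (snd x) g (cond_velocity smin (fst x) f g)))\<^sup>2) \<partial>mu (fst x) f \<partial>\<nu>) \<noteq> \<infinity>"
    by (rule nn_integral_PInf_AE[OF mFD]) (use L2_D in \<open>simp add: split_beta' less_top\<close>)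
  have aeY: "AE x in T. (\<integral>\<^sup>+f. \<integral>\<^sup>+g. ennreal ((norm (cond_velocity smin (fst x) f g))\<^sup>2) \<partial>mu (fst x) f \<partial>\<nu>) \<noteq> \<infinity>"
    by (rule nn_integral_PInf_AE[OF mFuf]) (use L2_uf in \<open>simp add: split_beta' less_top\<close>)
  have aeU: "AE x in T. (\<integral>\<^sup>+g. ennreal ((norm (mean_velocity phi (fst x) (snd x) g))\<^sup>2) \<partial>mum (fst x)) \<noteq> \<infinity>"
    by (rule nn_integral_PInf_AE[OF mFU]) (use L2_ubar in \<open>simp add: split_beta' less_top\<close>)
  have aeT: "AE x in T. (\<integral>\<^sup>+g. ennreal ((norm (ubth \<theta> (fst x) (snd x) g))\<^sup>2) \<partial>mum (fst x)) \<noteq> \<infinity>" for \<theta>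
    by (rule nn_integral_PInf_AE[OF mFT]) (use L2_ubth[of \<theta>] in \<open>simp add: split_beta' less_top\<close>)
  have aeEq: "AE x in T. (\<integral>f. \<integral>g. (norm (XX (fst x) (snd x) f g - ubth \<theta> (fst x) (snd x) g))\<^sup>2 \<partial>mu (fst x) f \<partial>\<nu>)
      = (\<integral>g. (norm (mean_velocity phi (fst x) (snd x) g - ubth \<theta> (fst x) (snd x) g))\<^sup>2 \<partial>mum (fst x))
        + ((\<integral>f. \<integral>g. (norm (XX (fst x) (snd x) f g))\<^sup>2 \<partial>mu (fst x) f \<partial>\<nu>) - (\<integral>g. (norm (mean_velocity phi (fst x) (snd x) g))\<^sup>2 \<partial>mum (fst x)))" for \<theta>
    using aeS aeD aeY aeU aeT[of \<theta>]
  proof eventually_elim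
    case (elim x)
    then show ?case by (intro PW) auto
  qed
  have slU: "(\<lambda>g. ennreal ((norm (h (fst x) (snd x) g))\<^sup>2)) \<in> borel_measurable (mum (fst x))"
    if hm: "(\<lambda>q::(real \<times> real) \<times> 'f. h (fst (fst q)) (snd (fst q)) (snd q))
          \<in> borel_measurable ((borel \<Otimes>\<^sub>M borel) \<Otimes>\<^sub>M borel)"
    for h :: "real \<Rightarrow> real \<Rightarrow> 'f \<Rightarrow> 'f" and x :: "real \<times> real"
  proof -
    have "(\<lambda>g. h (fst x) (snd x) g) \<in> borel_measurable borel"
      using measurable_Pair2[OF hm, of x] by (simp add: space_pair_measure)
    then show ?thesis
      by (intro meas_norm_sq(2)) (simp add: measurable_cong_sets[OF mum_sets refl])
  qed
  have iRR: "integrable T (\<lambda>x. \<integral>g. (norm (mean_velocity phi (fst x) (snd x) g - ubth \<theta> (fst x) (snd x) g))\<^sup>2 \<partial>mum (fst x))" for \<theta>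
  proof (rule integrableI_nonneg[OF mRR])
    show "AE x in T. 0 \<le> (\<integral>g. (norm (mean_velocity phi (fst x) (snd x) g - ubth \<theta> (fst x) (snd x) g))\<^sup>2 \<partial>mum (fst x))"
      by (auto intro!: AE_I2 integral_nonneg)
    have "(\<integral>\<^sup>+x. ennreal (\<integral>g. (norm (mean_velocity phi (fst x) (snd x) g - ubth \<theta> (fst x) (snd x) g))\<^sup>2 \<partial>mum (fst x)) \<partial>T)
        \<le> (\<integral>\<^sup>+x. \<integral>\<^sup>+g. ennreal ((norm (mean_velocity phi (fst x) (snd x) g - ubth \<theta> (fst x) (snd x) g))\<^sup>2) \<partial>mum (fst x) \<partial>T)"
      by (intro nn_integral_mono ennreal_integral_le_nn) auto
    also have "\<dots> \<le> (\<integral>\<^sup>+x. 2 * (\<integral>\<^sup>+g. ennreal ((norm (mean_velocity phi (fst x) (snd x) g))\<^sup>2) \<partial>mum (fst x))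
        + 2 * (\<integral>\<^sup>+g. ennreal ((norm (ubth \<theta> (fst x) (snd x) g))\<^sup>2) \<partial>mum (fst x)) \<partial>T)"
    proof (intro nn_integral_mono)
      fix x :: "real \<times> real"
      have "(\<integral>\<^sup>+g. ennreal ((norm (mean_velocity phi (fst x) (snd x) g - ubth \<theta> (fst x) (snd x) g))\<^sup>2) \<partial>mum (fst x))
          \<le> (\<integral>\<^sup>+g. 2 * ennreal ((norm (mean_velocity phi (fst x) (snd x) g))\<^sup>2) + 2 * ennreal ((norm (ubth \<theta> (fst x) (snd x) g))\<^sup>2) \<partial>mum (fst x))"
      proof (intro nn_integral_mono)
        fix g
        have "ennreal ((norm (mean_velocity phi (fst x) (snd x) g - ubth \<theta> (fst x) (snd x) g))\<^sup>2)
            \<le> ennreal (2 * (norm (mean_velocity phi (fst x) (snd x) g))\<^sup>2 + 2 * (norm (ubth \<theta> (fst x) (snd x) g))\<^sup>2)"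
          by (intro ennreal_leI norm_diff_sq_le)
        also have "\<dots> = 2 * ennreal ((norm (mean_velocity phi (fst x) (snd x) g))\<^sup>2) + 2 * ennreal ((norm (ubth \<theta> (fst x) (snd x) g))\<^sup>2)"
          by (simp add: ennreal_plus ennreal_mult)
        finally show "ennreal ((norm (mean_velocity phi (fst x) (snd x) g - ubth \<theta> (fst x) (snd x) g))\<^sup>2)
            \<le> 2 * ennreal ((norm (mean_velocity phi (fst x) (snd x) g))\<^sup>2) + 2 * ennreal ((norm (ubth \<theta> (fst x) (snd x) g))\<^sup>2)" .
      qed
      also have "\<dots> = 2 * (\<integral>\<^sup>+g. ennreal ((norm (mean_velocity phi (fst x) (snd x) g))\<^sup>2) \<partial>mum (fst x))
          + 2 * (\<integral>\<^sup>+g. ennreal ((norm (ubth \<theta> (fst x) (snd x) g))\<^sup>2) \<partial>mum (fst x))"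
        by (rule nn1_add[OF slU[of "\<lambda>t r g. mean_velocity phi t r g", OF mU3] slU[of "\<lambda>t r g. ubth \<theta> t r g", OF mT3]])
      finally show "(\<integral>\<^sup>+g. ennreal ((norm (mean_velocity phi (fst x) (snd x) g - ubth \<theta> (fst x) (snd x) g))\<^sup>2) \<partial>mum (fst x))
          \<le> 2 * (\<integral>\<^sup>+g. ennreal ((norm (mean_velocity phi (fst x) (snd x) g))\<^sup>2) \<partial>mum (fst x))
          + 2 * (\<integral>\<^sup>+g. ennreal ((norm (ubth \<theta> (fst x) (snd x) g))\<^sup>2) \<partial>mum (fst x))" .
    qed
    also have "\<dots> = 2 * (\<integral>\<^sup>+x. \<integral>\<^sup>+g. ennreal ((norm (mean_velocity phi (fst x) (snd x) g))\<^sup>2) \<partial>mum (fst x) \<partial>T)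
        + 2 * (\<integral>\<^sup>+x. \<integral>\<^sup>+g. ennreal ((norm (ubth \<theta> (fst x) (snd x) g))\<^sup>2) \<partial>mum (fst x) \<partial>T)"
      by (rule nn1_add[OF mFU mFT])
    also have "\<dots> < \<infinity>"
      using L2_ubar L2_ubth[of \<theta>] by (simp add: split_beta' less_top[symmetric] ennreal_mult_eq_top_iff)
    finally show "(\<integral>\<^sup>+x. ennreal (\<integral>g. (norm (mean_velocity phi (fst x) (snd x) g - ubth \<theta> (fst x) (snd x) g))\<^sup>2 \<partial>mum (fst x)) \<partial>T) < \<infinity>" .
  qed
  have iC2: "integrable T (\<lambda>x. \<integral>g. (norm (mean_velocity phi (fst x) (snd x) g))\<^sup>2 \<partial>mum (fst x))"
  proof (rule integrableI_nonneg[OF mC2])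
    show "AE x in T. 0 \<le> (\<integral>g. (norm (mean_velocity phi (fst x) (snd x) g))\<^sup>2 \<partial>mum (fst x))"
      by (auto intro!: AE_I2 integral_nonneg)
    have "(\<integral>\<^sup>+x. ennreal (\<integral>g. (norm (mean_velocity phi (fst x) (snd x) g))\<^sup>2 \<partial>mum (fst x)) \<partial>T)
        \<le> (\<integral>\<^sup>+x. \<integral>\<^sup>+g. ennreal ((norm (mean_velocity phi (fst x) (snd x) g))\<^sup>2) \<partial>mum (fst x) \<partial>T)"
      by (intro nn_integral_mono ennreal_integral_le_nn) auto
    also have "\<dots> < \<infinity>" using L2_ubar by (simp add: split_beta')
    finally show "(\<integral>\<^sup>+x. ennreal (\<integral>g. (norm (mean_velocity phi (fst x) (snd x) g))\<^sup>2 \<partial>mum (fst x)) \<partial>T) < \<infinity>" .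
  qed
  have iC1: "integrable T (\<lambda>x. \<integral>f. \<integral>g. (norm (XX (fst x) (snd x) f g))\<^sup>2 \<partial>mu (fst x) f \<partial>\<nu>)"
  proof (rule integrableI_nonneg[OF mC1])
    show "AE x in T. 0 \<le> (\<integral>f. \<integral>g. (norm (XX (fst x) (snd x) f g))\<^sup>2 \<partial>mu (fst x) f \<partial>\<nu>)"
      by (auto intro!: AE_I2 integral_nonneg)
    have "(\<integral>\<^sup>+x. ennreal (\<integral>f. \<integral>g. (norm (XX (fst x) (snd x) f g))\<^sup>2 \<partial>mu (fst x) f \<partial>\<nu>) \<partial>T)
        \<le> (\<integral>\<^sup>+x. \<integral>\<^sup>+f. \<integral>\<^sup>+g. ennreal ((norm (XX (fst x) (snd x) f g))\<^sup>2) \<partial>mu (fst x) f \<partial>\<nu> \<partial>T)"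
    proof (intro nn_integral_mono)
      fix x :: "real \<times> real"
      have "ennreal (\<integral>f. \<integral>g. (norm (XX (fst x) (snd x) f g))\<^sup>2 \<partial>mu (fst x) f \<partial>\<nu>)
          \<le> (\<integral>\<^sup>+f. ennreal (\<integral>g. (norm (XX (fst x) (snd x) f g))\<^sup>2 \<partial>mu (fst x) f) \<partial>\<nu>)"
        by (intro ennreal_integral_le_nn integral_nonneg) auto
      also have "\<dots> \<le> (\<integral>\<^sup>+f. \<integral>\<^sup>+g. ennreal ((norm (XX (fst x) (snd x) f g))\<^sup>2) \<partial>mu (fst x) f \<partial>\<nu>)"
        by (intro nn_integral_mono ennreal_integral_le_nn) auto
      finally show "ennreal (\<integral>f. \<integral>g. (norm (XX (fst x) (snd x) f g))\<^sup>2 \<partial>mu (fst x) f \<partial>\<nu>)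
          \<le> (\<integral>\<^sup>+f. \<integral>\<^sup>+g. ennreal ((norm (XX (fst x) (snd x) f g))\<^sup>2) \<partial>mu (fst x) f \<partial>\<nu>)" .
    qed
    also have "\<dots> \<le> (\<integral>\<^sup>+x. 2 * (\<integral>\<^sup>+f. \<integral>\<^sup>+g. ennreal ((norm (ubdt (fst x) (snd x) g + Dub (fst x) (snd x) g (cond_velocity smin (fst x) f g)))\<^sup>2) \<partial>mu (fst x) f \<partial>\<nu>)
          + 2 * (\<integral>\<^sup>+f. \<integral>\<^sup>+g. ennreal ((norm (cond_velocity smin (fst x) f g))\<^sup>2) \<partial>mu (fst x) f \<partial>\<nu>) \<partial>T)"
      by (rule nn_integral_mono_AE, rule eventually_mono[OF aeS], rule XXb, auto)
    also have "\<dots> = 2 * (\<integral>\<^sup>+x. \<integral>\<^sup>+f. \<integral>\<^sup>+g. ennreal ((norm (ubdt (fst x) (snd x) g + Dub (fst x) (snd x) g (cond_velocity smin (fst x) f g)))\<^sup>2) \<partial>mu (fst x) f \<partial>\<nu> \<partial>T)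
          + 2 * (\<integral>\<^sup>+x. \<integral>\<^sup>+f. \<integral>\<^sup>+g. ennreal ((norm (cond_velocity smin (fst x) f g))\<^sup>2) \<partial>mu (fst x) f \<partial>\<nu> \<partial>T)"
      by (rule nn1_add[OF mFD mFuf])
    also have "\<dots> < \<infinity>"
      using L2_D L2_uf by (simp add: split_beta' less_top[symmetric] ennreal_mult_eq_top_iff)
    finally show "(\<integral>\<^sup>+x. ennreal (\<integral>f. \<integral>g. (norm (XX (fst x) (snd x) f g))\<^sup>2 \<partial>mu (fst x) f \<partial>\<nu>) \<partial>T) < \<infinity>" .
  qed
  define C where "C = (\<integral>x. (\<integral>f. \<integral>g. (norm (XX (fst x) (snd x) f g))\<^sup>2 \<partial>mu (fst x) f \<partial>\<nu>)
      - (\<integral>g. (norm (mean_velocity phi (fst x) (snd x) g))\<^sup>2 \<partial>mum (fst x)) \<partial>T)"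
  have main: "(\<integral>x. (\<integral>f. \<integral>g. (norm (XX (fst x) (snd x) f g - ubth \<theta> (fst x) (snd x) g))\<^sup>2 \<partial>mu (fst x) f \<partial>\<nu>) \<partial>T)
      = (\<integral>x. (\<integral>g. (norm (mean_velocity phi (fst x) (snd x) g - ubth \<theta> (fst x) (snd x) g))\<^sup>2 \<partial>mum (fst x)) \<partial>T) + C" for \<theta>
  proof -
    have "(\<integral>x. (\<integral>f. \<integral>g. (norm (XX (fst x) (snd x) f g - ubth \<theta> (fst x) (snd x) g))\<^sup>2 \<partial>mu (fst x) f \<partial>\<nu>) \<partial>T)
        = (\<integral>x. (\<integral>g. (norm (mean_velocity phi (fst x) (snd x) g - ubth \<theta> (fst x) (snd x) g))\<^sup>2 \<partial>mum (fst x))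
          + ((\<integral>f. \<integral>g. (norm (XX (fst x) (snd x) f g))\<^sup>2 \<partial>mu (fst x) f \<partial>\<nu>) - (\<integral>g. (norm (mean_velocity phi (fst x) (snd x) g))\<^sup>2 \<partial>mum (fst x))) \<partial>T)"
      by (rule integral_cong_AE[OF mLL _ aeEq]) (intro borel_measurable_add borel_measurable_diff mRR mC1 mC2)
    also have "\<dots> = (\<integral>x. (\<integral>g. (norm (mean_velocity phi (fst x) (snd x) g - ubth \<theta> (fst x) (snd x) g))\<^sup>2 \<partial>mum (fst x)) \<partial>T) + C"
      unfolding C_def using iRR[of \<theta>] iC1 iC2
      by (simp add: Bochner_Integration.integral_add Bochner_Integration.integrable_diff)
    finally show ?thesis .
  qed
  show ?thesis
  proof (intro exI allI)
    fix \<theta>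
    show "(\<integral>(t, r). (\<integral>f. (\<integral>g. (norm ((r - t) *\<^sub>R (ubdt t r g + Dub t r g (cond_velocity smin t f g))
                 + cond_velocity smin t f g - ubth \<theta> t r g))\<^sup>2 \<partial>mu t f) \<partial>\<nu>) \<partial>T)
      = (\<integral>(t, r). (\<integral>g. (norm (mean_velocity phi t r g - ubth \<theta> t r g))\<^sup>2 \<partial>mum t) \<partial>T) + C"
      using main[of \<theta>] by (simp add: XX_def split_beta')
  qed
qed

end
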